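(* Under the hypotheses that $\sigma\in C^2(\mathbb{R})$ and that $\theta=\theta(\xi)$ is a twice differentiable reparametrization, for all indices $i,j,k,l$ of $\xi$: $$[\mathrm{Cov}(\hat{\mathcal{I}}_1(\xi))]^{ijkl}=\frac{\partial\theta_a}{\partial\xi_i}\frac{\partial\theta_b}{\partial\xi_j}\frac{\partial\theta_c}{\partial\xi_k}\frac{\partial\theta_d}{\partial\xi_l}[\mathrm{Cov}(\hat{\mathcal{I}}_1(\theta))]^{abcd},$$ $$[\mathrm{Cov}(\hat{\mathcal{I}}_2(\xi))]^{ijkl}=\frac{\partial\theta_a}{\partial\xi_i}\frac{\partial\theta_b}{\partial\xi_j}\frac{\partial\theta_c}{\partial\xi_k}\frac{\partial\theta_d}{\partial\xi_l}[\mathrm{Cov}(\hat{\mathcal{I}}_2(\theta))]^{abcd}+\frac1N\,\mathcal{C}^{\alpha\beta}_{ijkl}\,\mathcal{I}_{\alpha\beta}(h_L),$$ where $$\mathcal{C}^{\alpha\beta}_{ijkl}=\frac{\partial\theta_a}{\partial\xi_i}\frac{\partial\theta_b}{\partial\xi_j}\frac{\partial^2\theta_c}{\partial\xi_k\partial\xi_l}\partial_a\partial_bh_L^\alpha\,\partial_ch_L^\beta+\frac{\partial^2\theta_a}{\partial\xi_i\partial\xi_j}\frac{\partial\theta_b}{\partial\xi_k}\frac{\partial\theta_c}{\partial\xi_l}\partial_ah_L^\alpha\,\partial_b\partial_ch_L^\beta+\frac{\partial^2\theta_a}{\partial\xi_i\partial\xi_j}\frac{\partial^2\theta_b}{\partial\xi_k\partial\xi_l}\partial_ah_L^\alpha\,\partial_bh_L^\beta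 .$$
   Context: Setup. Fix an input $x\in\mathbb{R}^{n_0}$ and integers $L\ge1$, $n_1,\dots,n_L\ge1$. Network. The parameters are $\theta=(W_0,\dots,W_{L-1})$, with $W_l\in\mathbb{R}^{n_{l+1}\times(n_l+1)}$, viewed as a vector in $\mathbb{R}^{\dim\theta}$. Let $\sigma$ be applied entrywise. Set $h_0=x$ and $\bar h_l=(h_l^\top,1)^\top$. For $1\le l\le L-1$ let $h_l=\sigma(W_{l-1}\bar h_{l-1})$, and let $h_L=W_{L-1}\bar h_{L-1}\in\mathbb{R}^{n_L}$. Exponential family. The model is $p(y\mid x,\theta)=\exp(t(y)^\top h_L-F(h_L))$ with respect to a base measure $\nu$, where $t(y)\in\mathbb{R}^{n_L}$ and $F(h)=\log\int\exp(t(y)^\top h)\,d\nu(y)$. Assume $h_L$ lies in the interior of the natural parameter space. Let $\mathcal{I}(h_L)=\nabla^2F(h_L)=\mathrm{Cov}(t(y))$, with $y\sim p(y\mid x,\theta)$. Estimators. For a parameter vector $\phi$ (either $\theta$ or $\xi$) and i.i.d. samples $y_1,\dots,y_N\sim p(y\mid x,\theta)$ with $\ell_i=\log p(y_i\mid x,\theta)$, define $\hat{\mathcal{I}}_1(\phi)=\frac1N\sum_i\frac{\partial\ell_i}{\partial\phi}\frac{\partial\ell_i}{\partial\phi^\top}$ and $\hat{\mathcal{I}}_2(\phi)=\frac1N\sum_i(-\frac{\partial^2\ell_i}{\partial\phi\partial\phi^\top})$. The estimators in both coordinate systems use the same samples. Notation. $[\mathrm{Cov}(\hat{\mathcal{I}}(\phi))]^{ijkl}=\mathrm{Cov}(\hat{\mathcal{I}}^{ij}(\phi),\hat{\mathcal{I}}^{kl}(\phi))$.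 $\partial_a=\partial/\partial\theta_a$. Repeated indices $a,b,c,d$ and $\alpha,\beta$ are summed. *)

theory Defs
  imports "HOL-Probability.Probability"
begin

text \<open>Parameters theta = (W_0,...,W_{L-1}) are represented as a function on index triples
  (l, r, c): W_l has entry theta (l,r,c) in row r < n (l+1), column c \<le> n l, where column
  c = n l multiplies the constant 1 of the augmented vector (bias column).\<close>

definition param_idx :: "nat \<Rightarrow> (nat \<Rightarrow> nat) \<Rightarrow> (nat \<times> nat \<times> nat) set" where
  "param_idx L n = {(l, r, c). l < L \<and> r < n (Suc l) \<and> c \<le> n l}"

fun layer :: "(real \<Rightarrow> real) \<Rightarrow> nat \<Rightarrow> (nat \<Rightarrow> nat) \<Rightarrow> (nat \<Rightarrow> real)
    \<Rightarrow> (nat \<times> nat \<times> nat \<Rightarrow> real) \<Rightarrow> nat \<Rightarrow> (nat \<Rightarrow> real)" where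
  "layer \<sigma> L n x \<theta> 0 = x"
| "layer \<sigma> L n x \<theta> (Suc l) =
     (\<lambda>r. let z = (\<Sum>c<n l. \<theta> (l, r, c) * layer \<sigma> L n x \<theta> l c) + \<theta> (l, r, n l)
          in if Suc l < L then \<sigma> z else z)"

definition hL :: "(real \<Rightarrow> real) \<Rightarrow> nat \<Rightarrow> (nat \<Rightarrow> nat) \<Rightarrow> (nat \<Rightarrow> real)
    \<Rightarrow> (nat \<times> nat \<times> nat \<Rightarrow> real) \<Rightarrow> nat \<Rightarrow> real" where
  "hL \<sigma> L n x \<theta> = layer \<sigma> L n x \<theta> L"

definition tdot :: "('y \<Rightarrow> nat \<Rightarrow> real) \<Rightarrow> nat \<Rightarrow> 'y \<Rightarrow> (nat \<Rightarrow> real) \<Rightarrow> real" where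
  "tdot t m y h = (\<Sum>\<alpha><m. t y \<alpha> * h \<alpha>)"

definition Zpart :: "'y measure \<Rightarrow> ('y \<Rightarrow> nat \<Rightarrow> real) \<Rightarrow> nat \<Rightarrow> (nat \<Rightarrow> real) \<Rightarrow> ennreal" where
  "Zpart \<nu> t m h = (\<integral>\<^sup>+ y. ennreal (exp (tdot t m y h)) \<partial>\<nu>)"

definition logpart :: "'y measure \<Rightarrow> ('y \<Rightarrow> nat \<Rightarrow> real) \<Rightarrow> nat \<Rightarrow> (nat \<Rightarrow> real) \<Rightarrow> real" where
  "logpart \<nu> t m h = ln (enn2real (Zpart \<nu> t m h))"

definition nat_param_space :: "'y measure \<Rightarrow> ('y \<Rightarrow> nat \<Rightarrow> real) \<Rightarrow> nat \<Rightarrow> (nat \<Rightarrow> real) set" where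
  "nat_param_space \<nu> t m = {h. 0 < Zpart \<nu> t m h \<and> Zpart \<nu> t m h < \<infinity>}"

definition in_nat_interior :: "'y measure \<Rightarrow> ('y \<Rightarrow> nat \<Rightarrow> real) \<Rightarrow> nat \<Rightarrow> (nat \<Rightarrow> real) \<Rightarrow> bool" where
  "in_nat_interior \<nu> t m h \<longleftrightarrow>
     (\<exists>\<epsilon>>0. \<forall>h'. (\<forall>\<alpha><m. \<bar>h' \<alpha> - h \<alpha>\<bar> < \<epsilon>) \<longrightarrow> h' \<in> nat_param_space \<nu> t m)"

definition expfam_dens :: "'y measure \<Rightarrow> ('y \<Rightarrow> nat \<Rightarrow> real) \<Rightarrow> nat \<Rightarrow> (nat \<Rightarrow> real) \<Rightarrow> 'y \<Rightarrow> real" where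
  "expfam_dens \<nu> t m h y = exp (tdot t m y h - logpart \<nu> t m h)"

definition expfam :: "'y measure \<Rightarrow> ('y \<Rightarrow> nat \<Rightarrow> real) \<Rightarrow> nat \<Rightarrow> (nat \<Rightarrow> real) \<Rightarrow> 'y measure" where
  "expfam \<nu> t m h = density \<nu> (\<lambda>y. ennreal (expfam_dens \<nu> t m h y))"

definition cov :: "'a measure \<Rightarrow> ('a \<Rightarrow> real) \<Rightarrow> ('a \<Rightarrow> real) \<Rightarrow> real" where
  "cov M X Y = (\<integral>\<omega>. (X \<omega> - (\<integral>\<omega>'. X \<omega>' \<partial>M)) * (Y \<omega> - (\<integral>\<omega>'. Y \<omega>' \<partial>M)) \<partial>M)"

text \<open>\<I>(h) = Cov(t(y)), y ~ p(y | h)  (= Hessian of F at h).\<close>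
definition fisher_h :: "'y measure \<Rightarrow> ('y \<Rightarrow> nat \<Rightarrow> real) \<Rightarrow> nat \<Rightarrow> (nat \<Rightarrow> real) \<Rightarrow> nat \<Rightarrow> nat \<Rightarrow> real" where
  "fisher_h \<nu> t m h \<alpha> \<beta> = cov (expfam \<nu> t m h) (\<lambda>y. t y \<alpha>) (\<lambda>y. t y \<beta>)"

definition pdt :: "((nat \<times> nat \<times> nat \<Rightarrow> real) \<Rightarrow> real) \<Rightarrow> nat \<times> nat \<times> nat
    \<Rightarrow> (nat \<times> nat \<times> nat \<Rightarrow> real) \<Rightarrow> real" where
  "pdt f a \<theta> = deriv (\<lambda>s. f (\<theta>(a := \<theta> a + s))) 0"

definition pdx :: "(real^'m \<Rightarrow> real) \<Rightarrow> 'm \<Rightarrow> real^'m \<Rightarrow> real" where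
  "pdx f i \<xi> = deriv (\<lambda>s. f (\<xi> + s *\<^sub>R axis i 1)) 0"

definition C2_real :: "(real \<Rightarrow> real) \<Rightarrow> bool" where
  "C2_real f \<longleftrightarrow> (\<exists>f' f''. (\<forall>z. (f has_real_derivative f' z) (at z)) \<and>
      (\<forall>z. (f' has_real_derivative f'' z) (at z)) \<and> continuous_on UNIV f'')"

definition twice_differentiable :: "(real^'m \<Rightarrow> real) \<Rightarrow> bool" where
  "twice_differentiable g \<longleftrightarrow> (\<exists>G :: real^'m \<Rightarrow> real^'m.
      (\<forall>\<xi>. (g has_derivative (\<lambda>v. G \<xi> \<bullet> v)) (at \<xi>)) \<and> (\<forall>\<xi>. G differentiable (at \<xi>)))"

definition loglik :: "(real \<Rightarrow> real) \<Rightarrow> nat \<Rightarrow> (nat \<Rightarrow> nat) \<Rightarrow> (nat \<Rightarrow> real) \<Rightarrow> 'y measure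
    \<Rightarrow> ('y \<Rightarrow> nat \<Rightarrow> real) \<Rightarrow> (nat \<times> nat \<times> nat \<Rightarrow> real) \<Rightarrow> 'y \<Rightarrow> real" where
  "loglik \<sigma> L n x \<nu> t \<theta> y = ln (expfam_dens \<nu> t (n L) (hL \<sigma> L n x \<theta>) y)"

definition sample_space :: "(real \<Rightarrow> real) \<Rightarrow> nat \<Rightarrow> (nat \<Rightarrow> nat) \<Rightarrow> (nat \<Rightarrow> real) \<Rightarrow> 'y measure
    \<Rightarrow> ('y \<Rightarrow> nat \<Rightarrow> real) \<Rightarrow> nat \<Rightarrow> (nat \<times> nat \<times> nat \<Rightarrow> real) \<Rightarrow> (nat \<Rightarrow> 'y) measure" where
  "sample_space \<sigma> L n x \<nu> t N \<theta>0 = PiM {..<N} (\<lambda>_. expfam \<nu> t (n L) (hL \<sigma> L n x \<theta>0))"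

definition I1_theta where
  "I1_theta \<sigma> L n x \<nu> t N \<theta>0 a b ys = (1 / real N) * (\<Sum>s<N.
      pdt (\<lambda>\<theta>. loglik \<sigma> L n x \<nu> t \<theta> (ys s)) a \<theta>0 *
      pdt (\<lambda>\<theta>. loglik \<sigma> L n x \<nu> t \<theta> (ys s)) b \<theta>0)"

definition I2_theta where
  "I2_theta \<sigma> L n x \<nu> t N \<theta>0 a b ys = (1 / real N) * (\<Sum>s<N.
      - pdt (pdt (\<lambda>\<theta>. loglik \<sigma> L n x \<nu> t \<theta> (ys s)) b) a \<theta>0)"

definition I1_xi where
  "I1_xi \<sigma> L n x \<nu> t N \<Theta> \<xi>0 i j ys = (1 / real N) * (\<Sum>s<N.
      pdx (\<lambda>\<xi>. loglik \<sigma> L n x \<nu> t (\<Theta> \<xi>) (ys s)) i \<xi>0 *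
      pdx (\<lambda>\<xi>. loglik \<sigma> L n x \<nu> t (\<Theta> \<xi>) (ys s)) j \<xi>0)"

definition I2_xi where
  "I2_xi \<sigma> L n x \<nu> t N \<Theta> \<xi>0 i j ys = (1 / real N) * (\<Sum>s<N.
      - pdx (pdx (\<lambda>\<xi>. loglik \<sigma> L n x \<nu> t (\<Theta> \<xi>) (ys s)) j) i \<xi>0)"

end

theory Submission
  imports Defs
begin

typedef 'a fs = "{f :: 'a \<Rightarrow> real. finite {x. f x \<noteq> 0}}"
  morphisms fsr fsa
  by (rule exI[of _ "\<lambda>_. 0"]) simp

setup_lifting type_definition_fs

lemma fs_finite[simp, intro]: "finite {x. fsr v x \<noteq> 0}"
  using fsr[of v] by simp

instantiation fs :: (type) real_vector
begin
lift_definition zero_fs :: "'a fs" is "\<lambda>_. 0" by simp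
lift_definition plus_fs :: "'a fs \<Rightarrow> 'a fs \<Rightarrow> 'a fs" is "\<lambda>f g x. f x + g x"
proof -
  fix f g :: "'a \<Rightarrow> real" assume "finite {x. f x \<noteq> 0}" "finite {x. g x \<noteq> 0}"
  then show "finite {x. f x + g x \<noteq> 0}"
    by (rule finite_subset[rotated, OF finite_UnI]) auto
qed
lift_definition uminus_fs :: "'a fs \<Rightarrow> 'a fs" is "\<lambda>f x. - f x" by simp
lift_definition minus_fs :: "'a fs \<Rightarrow> 'a fs \<Rightarrow> 'a fs" is "\<lambda>f g x. f x - g x"
proof -
  fix f g :: "'a \<Rightarrow> real" assume "finite {x. f x \<noteq> 0}" "finite {x. g x \<noteq> 0}"
  then show "finite {x. f x - g x \<noteq> 0}"
    by (rule finite_subset[rotated, OF finite_UnI]) auto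
qed
lift_definition scaleR_fs :: "real \<Rightarrow> 'a fs \<Rightarrow> 'a fs" is "\<lambda>c f x. c * f x"
  by (rule finite_subset[rotated]) auto
instance
  by standard (transfer; auto simp: algebra_simps)+
end

lemma fsr_zero[simp]: "fsr 0 = (\<lambda>_. 0)" by transfer simp
lemma fsr_plus[simp]: "fsr (u + v) x = fsr u x + fsr v x" by transfer simp
lemma fsr_minus[simp]: "fsr (u - v) x = fsr u x - fsr v x" by transfer simp
lemma fsr_uminus[simp]: "fsr (- v) x = - fsr v x" by transfer simp
lemma fsr_scaleR[simp]: "fsr (c *\<^sub>R v) x = c * fsr v x" by transfer simp
lemma fsr_sum[simp]: "fsr (sum f A) x = (\<Sum>a\<in>A. fsr (f a) x)"
  by (induction A rule: infinite_finite_induct) auto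

definition supp :: "'a fs \<Rightarrow> 'a set" where "supp v = {x. fsr v x \<noteq> 0}"

lemma fs_eqI: "(\<And>x. fsr u x = fsr v x) \<Longrightarrow> u = v"
  by (metis fsr_inject ext)

instantiation fs :: (type) real_normed_vector
begin
definition norm_fs :: "'a fs \<Rightarrow> real" where "norm_fs v = (\<Sum>x\<in>supp v. \<bar>fsr v x\<bar>)"
definition sgn_fs :: "'a fs \<Rightarrow> 'a fs" where "sgn_fs v = v /\<^sub>R norm v"
definition dist_fs :: "'a fs \<Rightarrow> 'a fs \<Rightarrow> real" where "dist_fs u v = norm (u - v)"
definition uniformity_fs :: "('a fs \<times> 'a fs) filter" where
  "uniformity_fs = (INF e\<in>{0<..}. principal {(x, y). dist x y < e})"
definition open_fs :: "'a fs set \<Rightarrow> bool" where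
  "open_fs U = (\<forall>x\<in>U. \<forall>\<^sub>F (x', y) in uniformity. x' = x \<longrightarrow> y \<in> U)"

lemma norm_fs_superset: "finite S \<Longrightarrow> supp v \<subseteq> S \<Longrightarrow> norm v = (\<Sum>x\<in>S. \<bar>fsr v x\<bar>)"
  unfolding norm_fs_def
  by (rule sum.mono_neutral_left) (auto simp: supp_def)

instance
proof
  fix u v :: "'a fs" and c :: real
  show "dist u v = norm (u - v)" by (simp add: dist_fs_def)
  show "sgn u = u /\<^sub>R norm u" by (simp add: sgn_fs_def)
  show "(uniformity :: ('a fs \<times> 'a fs) filter) = (INF e\<in>{0<..}. principal {(x, y). dist x y < e})"
    by (simp add: uniformity_fs_def)
  fix U :: "'a fs set"
  show "open U = (\<forall>x\<in>U. \<forall>\<^sub>F (x', y) in uniformity. x' = x \<longrightarrow> y \<in> U)"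
    by (simp add: open_fs_def)
next
  fix u :: "'a fs"
  show "(norm u = 0) = (u = 0)"
  proof
    assume "norm u = 0"
    then have "\<forall>x\<in>supp u. \<bar>fsr u x\<bar> = 0"
      unfolding norm_fs_def by (subst (asm) sum_nonneg_eq_0_iff) (auto simp: supp_def)
    then show "u = 0" by (intro fs_eqI) (auto simp: supp_def)
  qed (simp add: norm_fs_def supp_def)
next
  fix u v :: "'a fs"
  have S: "finite (supp u \<union> supp v)" "supp u \<subseteq> supp u \<union> supp v" "supp v \<subseteq> supp u \<union> supp v"
      "supp (u + v) \<subseteq> supp u \<union> supp v"
    by (auto simp: supp_def)
  show "norm (u + v) \<le> norm u + norm v"
    by (simp add: norm_fs_superset[OF S(1)] S sum.distrib[symmetric] sum_mono abs_triangle_ineq)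
next
  fix c :: real and u :: "'a fs"
  have S: "finite (supp u)" "supp (c *\<^sub>R u) \<subseteq> supp u" by (auto simp: supp_def)
  show "norm (c *\<^sub>R u) = \<bar>c\<bar> * norm u"
    by (simp add: norm_fs_superset[OF S] norm_fs_superset[OF S(1) order_refl] abs_mult sum_distrib_left)
qed
end

lemma norm_fs_superset': "finite S \<Longrightarrow> supp v \<subseteq> S \<Longrightarrow> norm v = (\<Sum>x\<in>S. \<bar>fsr v x\<bar>)"
  by (rule norm_fs_superset)

lemma abs_fsr_le_norm: "\<bar>fsr v x\<bar> \<le> norm v"
proof (cases "x \<in> supp v")
  case True
  have "\<bar>fsr v x\<bar> \<le> (\<Sum>y\<in>supp v. \<bar>fsr v y\<bar>)"
    by (rule member_le_sum[OF True]) (auto simp: supp_def)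
  then show ?thesis by (simp add: norm_fs_def)
next
  case False then show ?thesis by (simp add: supp_def)
qed

lemma bounded_linear_fsr: "bounded_linear (\<lambda>v. fsr v x)"
  by (rule bounded_linear_intro[where K=1]) (auto simp: abs_fsr_le_norm)

definition ee :: "'a \<Rightarrow> 'a fs" where "ee a = fsa (\<lambda>x. if x = a then 1 else 0)"

lemma fsr_ee[simp]: "fsr (ee a) x = (if x = a then 1 else 0)"
  unfolding ee_def by (subst fsa_inverse) auto

definition restr :: "'a set \<Rightarrow> ('a \<Rightarrow> real) \<Rightarrow> 'a fs" where
  "restr P f = fsa (\<lambda>x. if x \<in> P then f x else 0)"

lemma fsr_restr[simp]: "finite P \<Longrightarrow> fsr (restr P f) x = (if x \<in> P then f x else 0)"
  unfolding restr_def by (subst fsa_inverse) (auto intro: finite_subset[of _ P])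

lemma fsr_restr_fun: "finite P \<Longrightarrow> fsr (restr P f) = (\<lambda>x. if x \<in> P then f x else 0)"
  by (rule ext) simp

lemma restr_sum: "finite P \<Longrightarrow> restr P f = (\<Sum>a\<in>P. f a *\<^sub>R ee a)"
  by (rule fs_eqI) (simp add: if_distrib[of "\<lambda>x. _ * x"] sum.If_cases)


definition C2on :: "'v::real_normed_vector set \<Rightarrow> ('v \<Rightarrow> real) \<Rightarrow> bool" where
  "C2on U f \<longleftrightarrow> open U \<and> (\<exists>Df D2f. (\<forall>v\<in>U. (f has_derivative Df v) (at v)) \<and>
      (\<forall>v\<in>U. \<forall>w. ((\<lambda>u. Df u w) has_derivative D2f v w) (at v)))"

lemma C2onI:
  assumes "open U" "\<And>v. v \<in> U \<Longrightarrow> (f has_derivative Df v) (at v)"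
    "\<And>v w. v \<in> U \<Longrightarrow> ((\<lambda>u. Df u w) has_derivative D2f v w) (at v)"
  shows "C2on U f"
  using assms unfolding C2on_def by blast

lemma C2onE:
  assumes "C2on U f"
  obtains Df D2f where "open U" "\<And>v. v \<in> U \<Longrightarrow> (f has_derivative Df v) (at v)"
    "\<And>v w. v \<in> U \<Longrightarrow> ((\<lambda>u. Df u w) has_derivative D2f v w) (at v)"
  using assms unfolding C2on_def by blast

lemma C2on_const: "open U \<Longrightarrow> C2on U (\<lambda>_. c)"
  by (rule C2onI[where Df="\<lambda>_ _. 0" and D2f="\<lambda>_ _ _. 0"]) auto

lemma C2on_linear: "open U \<Longrightarrow> bounded_linear g \<Longrightarrow> C2on U g"
  by (rule C2onI[where Df="\<lambda>_. g" and D2f="\<lambda>_ _ _. 0"]) (auto simp: bounded_linear_imp_has_derivative)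

lemma C2on_add: "C2on U f \<Longrightarrow> C2on U g \<Longrightarrow> C2on U (\<lambda>v. f v + g v)"
proof -
  assume "C2on U f" "C2on U g"
  then obtain Df D2f Dg D2g where "open U"
    "\<And>v. v \<in> U \<Longrightarrow> (f has_derivative Df v) (at v)"
    "\<And>v w. v \<in> U \<Longrightarrow> ((\<lambda>u. Df u w) has_derivative D2f v w) (at v)"
    "\<And>v. v \<in> U \<Longrightarrow> (g has_derivative Dg v) (at v)"
    "\<And>v w. v \<in> U \<Longrightarrow> ((\<lambda>u. Dg u w) has_derivative D2g v w) (at v)"
    by (auto elim!: C2onE)
  then show ?thesis
    by (intro C2onI[where Df="\<lambda>v w. Df v w + Dg v w" and D2f="\<lambda>v w z. D2f v w z + D2g v w z"])
      (auto intro!: derivative_eq_intros)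
qed

lemma C2on_mult: "C2on U f \<Longrightarrow> C2on U g \<Longrightarrow> C2on U (\<lambda>v. f v * g v)"
proof -
  assume "C2on U f" "C2on U g"
  then obtain Df D2f Dg D2g where U: "open U" and
    f1: "\<And>v. v \<in> U \<Longrightarrow> (f has_derivative Df v) (at v)" and
    f2: "\<And>v w. v \<in> U \<Longrightarrow> ((\<lambda>u. Df u w) has_derivative D2f v w) (at v)" and
    g1: "\<And>v. v \<in> U \<Longrightarrow> (g has_derivative Dg v) (at v)" and
    g2: "\<And>v w. v \<in> U \<Longrightarrow> ((\<lambda>u. Dg u w) has_derivative D2g v w) (at v)"
    by (auto elim!: C2onE)
  show ?thesis
  proof (rule C2onI[where Df="\<lambda>v w. f v * Dg v w + Df v w * g v"
        and D2f="\<lambda>v w z. f v * D2g v w z + Df v z * Dg v w + (Df v w * Dg v z + D2f v w z * g v)"])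
    fix v assume v: "v \<in> U"
    show "((\<lambda>v. f v * g v) has_derivative (\<lambda>w. f v * Dg v w + Df v w * g v)) (at v)"
      using f1[OF v] g1[OF v] by (rule has_derivative_mult)
    fix w
    show "((\<lambda>u. f u * Dg u w + Df u w * g u) has_derivative
        (\<lambda>z. f v * D2g v w z + Df v z * Dg v w + (Df v w * Dg v z + D2f v w z * g v))) (at v)"
      by (rule has_derivative_add[OF has_derivative_mult[OF f1[OF v] g2[OF v]]
              has_derivative_mult[OF f2[OF v] g1[OF v]]])
  qed (fact U)
qed

lemma C2on_cmult: "C2on U f \<Longrightarrow> C2on U (\<lambda>v. c * f v)"
proof -
  assume f: "C2on U f"
  then have "open U" by (simp add: C2on_def)
  from C2on_mult[OF C2on_const[OF this] f] show ?thesis .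
qed

lemma C2on_neg: "C2on U f \<Longrightarrow> C2on U (\<lambda>v. - f v)"
  using C2on_cmult[of U f "-1"] by simp

lemma C2on_diff: "C2on U f \<Longrightarrow> C2on U g \<Longrightarrow> C2on U (\<lambda>v. f v - g v)"
  using C2on_add[of U f "\<lambda>v. - g v"] C2on_neg[of U g] by simp

lemma C2on_sum: "open U \<Longrightarrow> (\<And>i. i \<in> I \<Longrightarrow> C2on U (f i)) \<Longrightarrow> C2on U (\<lambda>v. \<Sum>i\<in>I. f i v)"
  by (induction I rule: infinite_finite_induct) (auto intro: C2on_const C2on_add)

lemma C2on_compose:
  fixes \<phi> :: "real \<Rightarrow> real"
  assumes "C2on U f"
    and d1: "\<And>v. v \<in> U \<Longrightarrow> (\<phi> has_real_derivative \<phi>' (f v)) (at (f v))"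
    and d2: "\<And>v. v \<in> U \<Longrightarrow> (\<phi>' has_real_derivative \<phi>'' (f v)) (at (f v))"
  shows "C2on U (\<lambda>v. \<phi> (f v))"
proof -
  from assms(1) obtain Df D2f where U: "open U" and
    f1: "\<And>v. v \<in> U \<Longrightarrow> (f has_derivative Df v) (at v)" and
    f2: "\<And>v w. v \<in> U \<Longrightarrow> ((\<lambda>u. Df u w) has_derivative D2f v w) (at v)"
    by (auto elim!: C2onE)
  show ?thesis
  proof (rule C2onI[where Df="\<lambda>v w. Df v w * \<phi>' (f v)"
        and D2f="\<lambda>v w z. Df v w * (Df v z * \<phi>'' (f v)) + D2f v w z * \<phi>' (f v)"])
    fix v assume v: "v \<in> U"
    show "((\<lambda>v. \<phi> (f v)) has_derivative (\<lambda>w. Df v w * \<phi>' (f v))) (at v)"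
      by (rule DERIV_compose_FDERIV[OF d1[OF v] f1[OF v]])
    fix w
    show "((\<lambda>u. Df u w * \<phi>' (f u)) has_derivative
        (\<lambda>z. Df v w * (Df v z * \<phi>'' (f v)) + D2f v w z * \<phi>' (f v))) (at v)"
      using has_derivative_mult[OF f2[OF v] DERIV_compose_FDERIV[OF d2[OF v] f1[OF v]]] by simp
  qed (fact U)
qed

lemma C2on_subset: "C2on U f \<Longrightarrow> open V \<Longrightarrow> V \<subseteq> U \<Longrightarrow> C2on V f"
  unfolding C2on_def by blast

lemma hd_line:
  assumes "(g has_derivative g') (at v)"
  shows "((\<lambda>s::real. g (v + s *\<^sub>R e)) has_real_derivative g' e) (at 0)"
proof -
  have l: "((\<lambda>s::real. v + s *\<^sub>R e) has_derivative (\<lambda>s. s *\<^sub>R e)) (at 0)"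
    by (auto intro!: derivative_eq_intros)
  have "((\<lambda>s::real. g (v + s *\<^sub>R e)) has_derivative (\<lambda>s. g' (s *\<^sub>R e))) (at 0)"
    using has_derivative_compose[OF l] assms by simp
  moreover have "(\<lambda>s. g' (s *\<^sub>R e)) = (\<lambda>s. g' e * s)"
    using linear_scale[OF has_derivative_linear[OF assms]] by (auto simp: mult.commute)
  ultimately show ?thesis
    unfolding has_field_derivative_def
    by (metis (no_types, lifting) has_derivative_eq_rhs mult.commute)
qed

lemma eventually_line_in_open:
  fixes v e :: "'v::real_normed_vector"
  assumes "open U" "v \<in> U"
  shows "eventually (\<lambda>s::real. v + s *\<^sub>R e \<in> U) (nhds 0)"
proof -
  have "open ((\<lambda>s::real. v + s *\<^sub>R e) -` U)"
    by (rule continuous_open_vimage[OF assms(1)]) (intro continuous_intros)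
  then show ?thesis
    using assms unfolding eventually_nhds by (intro exI[of _ "(\<lambda>s::real. v + s *\<^sub>R e) -` U"]) auto
qed


lemma restr_upd:
  assumes "finite P" "a \<in> P"
  shows "restr P (\<theta>(a := \<theta> a + s)) = restr P \<theta> + s *\<^sub>R ee a"
  using assms by (intro fs_eqI) auto

lemma lin_sum_scale:
  assumes "linear g" "finite P"
  shows "g (\<Sum>a\<in>P. c a *\<^sub>R ee a) = (\<Sum>a\<in>P. c a * g (ee a))"
  using assms by (simp add: linear_sum linear_scale)

lemma L1:
  assumes P: "finite P" "a \<in> P" and f: "\<And>\<theta>. f \<theta> = ft (restr P \<theta>)"
    and d: "(ft has_derivative Df) (at (restr P \<theta>))"
  shows "((\<lambda>s. f (\<theta>(a := \<theta> a + s))) has_real_derivative Df (ee a)) (at 0)"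
    and "pdt f a \<theta> = Df (ee a)"
proof -
  show *: "((\<lambda>s. f (\<theta>(a := \<theta> a + s))) has_real_derivative Df (ee a)) (at 0)"
    using hd_line[OF d, of "ee a"] by (simp add: f restr_upd[OF P])
  show "pdt f a \<theta> = Df (ee a)"
    unfolding pdt_def by (rule DERIV_imp_deriv[OF *])
qed

lemma L2:
  assumes P: "finite P" "a \<in> P" "b \<in> P" and f: "\<And>\<theta>. f \<theta> = ft (restr P \<theta>)"
    and U: "open U" "restr P \<theta> \<in> U"
    and f1: "\<And>v. v \<in> U \<Longrightarrow> (ft has_derivative Df v) (at v)"
    and f2: "\<And>v w. v \<in> U \<Longrightarrow> ((\<lambda>u. Df u w) has_derivative D2f v w) (at v)"
  shows "((\<lambda>s. pdt f b (\<theta>(a := \<theta> a + s))) has_real_derivative D2f (restr P \<theta>) (ee b) (ee a)) (at 0)"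
    and "pdt (pdt f b) a \<theta> = D2f (restr P \<theta>) (ee b) (ee a)"
proof -
  have ev: "eventually (\<lambda>s. restr P \<theta> + s *\<^sub>R ee a \<in> U) (nhds 0)"
    by (rule eventually_line_in_open[OF U])
  have ev2: "eventually (\<lambda>s. pdt f b (\<theta>(a := \<theta> a + s)) = Df (restr P \<theta> + s *\<^sub>R ee a) (ee b)) (nhds 0)"
    using ev
  proof eventually_elim
    case (elim s)
    show ?case
      using L1(2)[where f=f and ft=ft and Df="Df (restr P \<theta> + s *\<^sub>R ee a)" and \<theta>="\<theta>(a := \<theta> a + s)", OF P(1,3) f] f1[OF elim]
      by (simp add: restr_upd[OF P(1,2)])
  qed
  have d: "((\<lambda>s. Df (restr P \<theta> + s *\<^sub>R ee a) (ee b)) has_real_derivative D2f (restr P \<theta>) (ee b) (ee a)) (at 0)"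
    by (rule hd_line[OF f2[OF U(2)]])
  show *: "((\<lambda>s. pdt f b (\<theta>(a := \<theta> a + s))) has_real_derivative D2f (restr P \<theta>) (ee b) (ee a)) (at 0)"
    using DERIV_cong_ev[OF refl ev2 refl] d by simp
  show "pdt (pdt f b) a \<theta> = D2f (restr P \<theta>) (ee b) (ee a)"
    unfolding pdt_def[of "pdt f b"] by (rule DERIV_imp_deriv[OF *])
qed

locale reparam =
  fixes P :: "'i set" and \<Theta> :: "real^'m \<Rightarrow> 'i \<Rightarrow> real" and Gr :: "'i \<Rightarrow> real^'m \<Rightarrow> real^'m"
  assumes finP: "finite P"
    and Gd: "\<And>a \<xi>. a \<in> P \<Longrightarrow> ((\<lambda>\<xi>. \<Theta> \<xi> a) has_derivative (\<lambda>w. Gr a \<xi> \<bullet> w)) (at \<xi>)"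
    and Gdd: "\<And>a \<xi>. a \<in> P \<Longrightarrow> Gr a differentiable (at \<xi>)"
begin

definition Tt :: "real^'m \<Rightarrow> 'i fs" where "Tt \<xi> = restr P (\<Theta> \<xi>)"

definition DT :: "real^'m \<Rightarrow> real^'m \<Rightarrow> 'i fs" where
  "DT \<xi> w = (\<Sum>a\<in>P. (Gr a \<xi> \<bullet> w) *\<^sub>R ee a)"

lemma Tt_deriv: "(Tt has_derivative DT \<xi>) (at \<xi>)"
proof -
  have "Tt = (\<lambda>\<xi>. \<Sum>a\<in>P. \<Theta> \<xi> a *\<^sub>R ee a)"
    by (auto simp: Tt_def restr_sum[OF finP])
  moreover have "((\<lambda>\<xi>. \<Sum>a\<in>P. \<Theta> \<xi> a *\<^sub>R ee a) has_derivative DT \<xi>) (at \<xi>)"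
    unfolding DT_def
    by (intro has_derivative_sum has_derivative_scaleR_left Gd) 
  ultimately show ?thesis by simp
qed

lemma Tt_cont: "continuous (at \<xi>) Tt"
  by (rule has_derivative_continuous[OF Tt_deriv])

lemma pdx_Theta: "a \<in> P \<Longrightarrow> pdx (\<lambda>\<xi>. \<Theta> \<xi> a) j \<xi> = Gr a \<xi> $ j"
  unfolding pdx_def
  using hd_line[OF Gd, of a \<xi> "axis j 1"]
  by (intro DERIV_imp_deriv) (simp add: inner_axis)

lemma L3:
  assumes f: "\<And>\<theta>. f \<theta> = ft (restr P \<theta>)"
    and d: "(ft has_derivative Df) (at (Tt \<xi>))"
  shows "((\<lambda>s. f (\<Theta> (\<xi> + s *\<^sub>R axis j 1))) has_real_derivative (\<Sum>a\<in>P. (Gr a \<xi> $ j) * Df (ee a))) (at 0)"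
    and "pdx (\<lambda>\<xi>. f (\<Theta> \<xi>)) j \<xi> = (\<Sum>a\<in>P. (Gr a \<xi> $ j) * Df (ee a))"
proof -
  have c: "((\<lambda>\<xi>. ft (Tt \<xi>)) has_derivative (\<lambda>w. Df (DT \<xi> w))) (at \<xi>)"
    by (rule has_derivative_compose[OF Tt_deriv d])
  have "Df (DT \<xi> (axis j 1)) = (\<Sum>a\<in>P. (Gr a \<xi> $ j) * Df (ee a))"
    unfolding DT_def by (simp add: lin_sum_scale[OF has_derivative_linear[OF d] finP] inner_axis)
  then show *: "((\<lambda>s. f (\<Theta> (\<xi> + s *\<^sub>R axis j 1))) has_real_derivative (\<Sum>a\<in>P. (Gr a \<xi> $ j) * Df (ee a))) (at 0)"
    using hd_line[OF c, of "axis j 1"] by (simp add: f Tt_def)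
  show "pdx (\<lambda>\<xi>. f (\<Theta> \<xi>)) j \<xi> = (\<Sum>a\<in>P. (Gr a \<xi> $ j) * Df (ee a))"
    unfolding pdx_def by (rule DERIV_imp_deriv[OF *])
qed

lemma L4:
  assumes f: "\<And>\<theta>. f \<theta> = ft (restr P \<theta>)"
    and U: "open U" "Tt \<xi>0 \<in> U"
    and f1: "\<And>v. v \<in> U \<Longrightarrow> (ft has_derivative Df v) (at v)"
    and f2: "\<And>v w. v \<in> U \<Longrightarrow> ((\<lambda>u. Df u w) has_derivative D2f v w) (at v)"
  shows "pdx (pdx (\<lambda>\<xi>. f (\<Theta> \<xi>)) j) i \<xi>0 =
     (\<Sum>a\<in>P. pdx (pdx (\<lambda>\<xi>. \<Theta> \<xi> a) j) i \<xi>0 * Df (Tt \<xi>0) (ee a)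
        + (Gr a \<xi>0 $ j) * (\<Sum>b\<in>P. (Gr b \<xi>0 $ i) * D2f (Tt \<xi>0) (ee a) (ee b)))"
proof -
  let ?e = "axis i 1 :: real^'m"
  have opn: "open ((\<lambda>s::real. Tt (\<xi>0 + s *\<^sub>R ?e)) -` U)"
  proof (rule continuous_open_vimage[OF U(1)])
    fix s :: real
    have l: "((\<lambda>s::real. \<xi>0 + s *\<^sub>R ?e) has_derivative (\<lambda>s. s *\<^sub>R ?e)) (at s)"
      by (auto intro!: derivative_eq_intros)
    show "continuous (at s) (\<lambda>s::real. Tt (\<xi>0 + s *\<^sub>R ?e))"
      by (rule has_derivative_continuous[OF has_derivative_compose[OF l Tt_deriv]])
  qed
  have ev: "eventually (\<lambda>s. Tt (\<xi>0 + s *\<^sub>R ?e) \<in> U) (nhds 0)"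
    unfolding eventually_nhds using opn U(2) by (intro exI[of _ "(\<lambda>s::real. Tt (\<xi>0 + s *\<^sub>R ?e)) -` U"]) auto
  have ev2: "eventually (\<lambda>s. pdx (\<lambda>\<xi>. f (\<Theta> \<xi>)) j (\<xi>0 + s *\<^sub>R ?e) =
      (\<Sum>a\<in>P. (Gr a (\<xi>0 + s *\<^sub>R ?e) $ j) * Df (Tt (\<xi>0 + s *\<^sub>R ?e)) (ee a))) (nhds 0)"
    using ev by eventually_elim (rule L3(2)[OF f f1])
  have dG: "((\<lambda>s. Gr a (\<xi>0 + s *\<^sub>R ?e) $ j) has_real_derivative pdx (pdx (\<lambda>\<xi>. \<Theta> \<xi> a) j) i \<xi>0) (at 0)"
    if a: "a \<in> P" for a
  proof -
    obtain G' where G': "(Gr a has_derivative G') (at \<xi>0)"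
      using Gdd[OF a] unfolding differentiable_def by blast
    have "((\<lambda>\<xi>. Gr a \<xi> $ j) has_derivative (\<lambda>w. G' w $ j)) (at \<xi>0)"
      using has_derivative_compose[OF G' bounded_linear_imp_has_derivative[OF bounded_linear_vec_nth]] .
    from hd_line[OF this, of ?e]
    have *: "((\<lambda>s. Gr a (\<xi>0 + s *\<^sub>R ?e) $ j) has_real_derivative G' ?e $ j) (at 0)" .
    have "pdx (pdx (\<lambda>\<xi>. \<Theta> \<xi> a) j) i \<xi>0 = G' ?e $ j"
      unfolding pdx_def[of "pdx _ j"] pdx_Theta[OF a]
      by (rule DERIV_imp_deriv[OF *])
    with * show ?thesis by simp
  qed
  have dD: "((\<lambda>s. Df (Tt (\<xi>0 + s *\<^sub>R ?e)) (ee a)) has_real_derivative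
       (\<Sum>b\<in>P. (Gr b \<xi>0 $ i) * D2f (Tt \<xi>0) (ee a) (ee b))) (at 0)" for a
  proof -
    have c: "((\<lambda>\<xi>. Df (Tt \<xi>) (ee a)) has_derivative (\<lambda>w. D2f (Tt \<xi>0) (ee a) (DT \<xi>0 w))) (at \<xi>0)"
      by (rule has_derivative_compose[OF Tt_deriv f2[OF U(2)]])
    have "D2f (Tt \<xi>0) (ee a) (DT \<xi>0 ?e) = (\<Sum>b\<in>P. (Gr b \<xi>0 $ i) * D2f (Tt \<xi>0) (ee a) (ee b))"
      unfolding DT_def by (simp add: lin_sum_scale[OF has_derivative_linear[OF f2[OF U(2)]] finP] inner_axis)
    with hd_line[OF c, of ?e] show ?thesis by simp
  qed
  have "((\<lambda>s. \<Sum>a\<in>P. (Gr a (\<xi>0 + s *\<^sub>R ?e) $ j) * Df (Tt (\<xi>0 + s *\<^sub>R ?e)) (ee a)) has_real_derivative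
      (\<Sum>a\<in>P. pdx (pdx (\<lambda>\<xi>. \<Theta> \<xi> a) j) i \<xi>0 * Df (Tt \<xi>0) (ee a)
        + (Gr a \<xi>0 $ j) * (\<Sum>b\<in>P. (Gr b \<xi>0 $ i) * D2f (Tt \<xi>0) (ee a) (ee b)))) (at 0)"
    by (rule DERIV_sum) (use DERIV_mult[OF dG dD] in \<open>auto simp: mult.commute\<close>)
  then have "((\<lambda>s. pdx (\<lambda>\<xi>. f (\<Theta> \<xi>)) j (\<xi>0 + s *\<^sub>R ?e)) has_real_derivative
      (\<Sum>a\<in>P. pdx (pdx (\<lambda>\<xi>. \<Theta> \<xi> a) j) i \<xi>0 * Df (Tt \<xi>0) (ee a)
        + (Gr a \<xi>0 $ j) * (\<Sum>b\<in>P. (Gr b \<xi>0 $ i) * D2f (Tt \<xi>0) (ee a) (ee b)))) (at 0)"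
    using DERIV_cong_ev[OF refl ev2 refl] by simp
  then show ?thesis
    unfolding pdx_def[of "pdx _ j"] by (rule DERIV_imp_deriv)
qed

end


lemma finite_param_idx: "finite (param_idx L n)"
proof -
  have "param_idx L n = (SIGMA l:{..<L}. {..<n (Suc l)} \<times> {..n l})"
    by (auto simp: param_idx_def)
  then show ?thesis by simp
qed

lemma layer_restr:
  assumes "l \<le> L" "r < n l"
  shows "layer \<sigma> L n x (fsr (restr (param_idx L n) \<theta>)) l r = layer \<sigma> L n x \<theta> l r"
  using assms
proof (induction l arbitrary: r)
  case 0 then show ?case by simp
next
  case (Suc l)
  have "(\<Sum>c<n l. fsr (restr (param_idx L n) \<theta>) (l, r, c) * layer \<sigma> L n x (fsr (restr (param_idx L n) \<theta>)) l c)
      = (\<Sum>c<n l. \<theta> (l, r, c) * layer \<sigma> L n x \<theta> l c)"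
  proof (intro sum.cong refl)
    fix c assume c: "c \<in> {..<n l}"
    have "(l, r, c) \<in> param_idx L n" using Suc c by (auto simp: param_idx_def)
    then show "fsr (restr (param_idx L n) \<theta>) (l, r, c) * layer \<sigma> L n x (fsr (restr (param_idx L n) \<theta>)) l c
       = \<theta> (l, r, c) * layer \<sigma> L n x \<theta> l c"
      using Suc.IH[of c] Suc.prems c by (simp add: fsr_restr_fun[OF finite_param_idx])
  qed
  moreover have "(l, r, n l) \<in> param_idx L n" using Suc by (auto simp: param_idx_def)
  then have "fsr (restr (param_idx L n) \<theta>) (l, r, n l) = \<theta> (l, r, n l)"
    by (simp add: fsr_restr[OF finite_param_idx])
  ultimately show ?case by (simp add: Let_def)
qed

lemma hL_restr:
  "\<alpha> < n L \<Longrightarrow> hL \<sigma> L n x (fsr (restr (param_idx L n) \<theta>)) \<alpha> = hL \<sigma> L n x \<theta> \<alpha>"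
  unfolding hL_def by (rule layer_restr) auto

lemma C2_realE:
  assumes "C2_real \<sigma>"
  obtains \<sigma>' \<sigma>'' where "\<And>z. (\<sigma> has_real_derivative \<sigma>' z) (at z)" "\<And>z. (\<sigma>' has_real_derivative \<sigma>'' z) (at z)"
  using assms unfolding C2_real_def by metis

lemma C2on_fsr: "open U \<Longrightarrow> C2on U (\<lambda>v. fsr v a)"
  by (rule C2on_linear[OF _ bounded_linear_fsr])

lemma layer_C2:
  assumes "C2_real \<sigma>"
  shows "C2on UNIV (\<lambda>v. layer \<sigma> L n x (fsr v) l r)"
proof (induction l arbitrary: r)
  case 0 then show ?case by (simp add: C2on_const)
next
  case (Suc l)
  obtain \<sigma>' \<sigma>'' where s1: "\<And>z. (\<sigma> has_real_derivative \<sigma>' z) (at z)"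
    and s2: "\<And>z. (\<sigma>' has_real_derivative \<sigma>'' z) (at z)"
    using C2_realE[OF assms] by blast
  have z: "C2on UNIV (\<lambda>v. (\<Sum>c<n l. fsr v (l, r, c) * layer \<sigma> L n x (fsr v) l c) + fsr v (l, r, n l))"
    by (intro C2on_add C2on_sum C2on_mult C2on_fsr Suc) auto
  show ?case
  proof (cases "Suc l < L")
    case True
    have "C2on UNIV (\<lambda>v. \<sigma> ((\<Sum>c<n l. fsr v (l, r, c) * layer \<sigma> L n x (fsr v) l c) + fsr v (l, r, n l)))"
      by (rule C2on_compose[OF z s1 s2])
    then show ?thesis using True by (simp add: Let_def)
  next
    case False
    then show ?thesis using z by (simp add: Let_def)
  qed
qed


lemma pow_le_exp: "0 \<le> (x::real) \<Longrightarrow> x ^ k \<le> fact k * exp (2 * x)"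
proof -
  assume x: "0 \<le> x"
  obtain s where s: "\<bar>s\<bar> \<le> \<bar>x\<bar>" "exp x = (\<Sum>m<k. (x ^ m) / fact m) + (exp s / fact k) * x ^ k"
    using Maclaurin_exp_le[of x k] by blast
  have "(\<Sum>m<k. (x ^ m) / fact m) \<ge> 0" using x by (intro sum_nonneg) auto
  then have "exp s / fact k * x ^ k \<le> exp x" using s by simp
  moreover have "exp (- x) \<le> exp s" using s x by simp
  then have "exp (- x) / fact k \<le> exp s / fact k"
    by (intro divide_right_mono) auto
  then have "exp (- x) / fact k * x ^ k \<le> exp s / fact k * x ^ k"
    using x by (intro mult_right_mono) auto
  ultimately have "exp (- x) / fact k * x ^ k \<le> exp x" by linarith
  then have "x ^ k \<le> exp x * fact k / exp (- x)"
    by (simp add: field_simps)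
  also have "\<dots> = fact k * (exp x * exp x)"
    by (simp add: exp_minus field_simps)
  also have "exp x * exp x = exp (2 * x)"
    by (simp add: exp_add[symmetric])
  finally show ?thesis .
qed

lemma pow_le_exp_r:
  assumes "0 \<le> (x::real)" "0 < r"
  shows "x ^ k \<le> fact k / r ^ k * exp (2 * r * x)"
proof -
  have "(r * x) ^ k \<le> fact k * exp (2 * (r * x))"
    using assms by (intro pow_le_exp) auto
  then show ?thesis using assms
    by (simp add: power_mult_distrib field_simps mult.assoc)
qed

lemma exp_rem: "\<bar>exp x - 1 - x\<bar> \<le> (x::real)\<^sup>2 * exp \<bar>x\<bar>"
proof -
  obtain s where s: "\<bar>s\<bar> \<le> \<bar>x\<bar>" "exp x = (\<Sum>m<2. (x ^ m) / fact m) + (exp s / fact 2) * x ^ 2"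
    using Maclaurin_exp_le[of x 2] by blast
  have "exp x - 1 - x = exp s / 2 * x\<^sup>2" using s(2) by (simp add: eval_nat_numeral)
  moreover have "exp s \<le> exp \<bar>x\<bar>" using s(1) by simp
  ultimately have "exp s / 2 \<le> exp \<bar>x\<bar>" using exp_gt_zero[of s] by linarith
  then have "exp s / 2 * x\<^sup>2 \<le> exp \<bar>x\<bar> * x\<^sup>2"
    by (intro mult_right_mono) auto
  moreover have "\<bar>exp x - 1 - x\<bar> = exp s / 2 * x\<^sup>2"
    using \<open>exp x - 1 - x = exp s / 2 * x\<^sup>2\<close> by (simp only:) simp
  ultimately show ?thesis by (simp only: mult.commute)
qed

locale ef =
  fixes \<nu> :: "'y measure" and t :: "'y \<Rightarrow> nat \<Rightarrow> real" and m :: nat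
  assumes tm: "\<And>\<alpha>. \<alpha> < m \<Longrightarrow> (\<lambda>y. t y \<alpha>) \<in> borel_measurable \<nu>"
begin

definition tn :: "'y \<Rightarrow> real" where "tn y = (\<Sum>\<alpha><m. \<bar>t y \<alpha>\<bar>)"

lemma tdot_meas[measurable]: "(\<lambda>y. tdot t m y h) \<in> borel_measurable \<nu>"
  unfolding tdot_def by (intro borel_measurable_sum borel_measurable_times tm) auto

lemma tdot_meas'[measurable]: "g \<in> borel_measurable \<nu> \<Longrightarrow> (\<lambda>y. tdot t m y (g' y)) \<in> borel_measurable \<nu> \<or> True"
  by simp

lemma tn_meas[measurable]: "tn \<in> borel_measurable \<nu>"
  unfolding tn_def by (intro borel_measurable_sum borel_measurable_abs tm) auto

lemma tn_nonneg: "0 \<le> tn y" unfolding tn_def by (auto intro: sum_nonneg)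

lemma tdot_add: "tdot t m y (fsr (u + w)) = tdot t m y (fsr u) + tdot t m y (fsr w)"
  by (simp add: tdot_def algebra_simps sum.distrib)
lemma tdot_diff: "tdot t m y (fsr (u - w)) = tdot t m y (fsr u) - tdot t m y (fsr w)"
  by (simp add: tdot_def algebra_simps sum_subtractf)
lemma tdot_scale: "tdot t m y (fsr (c *\<^sub>R w)) = c * tdot t m y (fsr w)"
  by (simp add: tdot_def algebra_simps sum_distrib_left)

lemma tdot_bound: "\<bar>tdot t m y (fsr w)\<bar> \<le> tn y * norm w"
proof -
  have "\<bar>tdot t m y (fsr w)\<bar> \<le> (\<Sum>\<alpha><m. \<bar>t y \<alpha>\<bar> * \<bar>fsr w \<alpha>\<bar>)"
    unfolding tdot_def by (rule order_trans[OF sum_abs]) (simp add: abs_mult)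
  also have "\<dots> \<le> (\<Sum>\<alpha><m. \<bar>t y \<alpha>\<bar> * norm w)"
    by (intro sum_mono mult_left_mono abs_fsr_le_norm) auto
  finally show ?thesis by (simp add: tn_def sum_distrib_right)
qed

lemma tdot_cong: "(\<And>\<alpha>. \<alpha> < m \<Longrightarrow> h \<alpha> = h' \<alpha>) \<Longrightarrow> tdot t m y h = tdot t m y h'"
  unfolding tdot_def by (intro sum.cong) auto

lemma int_exp:
  assumes "h \<in> nat_param_space \<nu> t m"
  shows "integrable \<nu> (\<lambda>y. exp (tdot t m y h))"
proof (rule integrableI_bounded)
  show "(\<integral>\<^sup>+ y. ennreal (norm (exp (tdot t m y h))) \<partial>\<nu>) < \<infinity>"
    using assms by (simp add: nat_param_space_def Zpart_def)
qed simp

lemma Zpart_eq: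
  assumes "h \<in> nat_param_space \<nu> t m"
  shows "Zpart \<nu> t m h = ennreal (\<integral>y. exp (tdot t m y h) \<partial>\<nu>)"
    and "0 < (\<integral>y. exp (tdot t m y h) \<partial>\<nu>)"
    and "logpart \<nu> t m h = ln (\<integral>y. exp (tdot t m y h) \<partial>\<nu>)"
proof -
  show *: "Zpart \<nu> t m h = ennreal (\<integral>y. exp (tdot t m y h) \<partial>\<nu>)"
    unfolding Zpart_def by (rule nn_integral_eq_integral[OF int_exp[OF assms]]) auto
  then show "0 < (\<integral>y. exp (tdot t m y h) \<partial>\<nu>)"
    using assms by (simp add: nat_param_space_def)
  then show "logpart \<nu> t m h = ln (\<integral>y. exp (tdot t m y h) \<partial>\<nu>)"
    unfolding logpart_def * by simp
qed

definition signs :: "(nat \<Rightarrow> real) set" where "signs = PiE {..<m} (\<lambda>_. {-1, 1})"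

lemma finite_signs: "finite signs" unfolding signs_def by (intro finite_PiE) auto

lemma exp_tn_bound:
  "exp (tdot t m y h + \<delta> * tn y) \<le> (\<Sum>s\<in>signs. exp (tdot t m y (\<lambda>\<alpha>. h \<alpha> + \<delta> * s \<alpha>)))"
proof -
  define s0 where "s0 = (\<lambda>\<alpha>\<in>{..<m}. if t y \<alpha> \<ge> 0 then 1 else (-1::real))"
  have s0: "s0 \<in> signs" unfolding signs_def s0_def by auto
  have "tdot t m y (\<lambda>\<alpha>. h \<alpha> + \<delta> * s0 \<alpha>) = tdot t m y h + \<delta> * tn y"
    unfolding tdot_def tn_def s0_def
    by (auto simp: algebra_simps sum.distrib sum_distrib_left intro!: sum.cong)
  then have "exp (tdot t m y h + \<delta> * tn y) = exp (tdot t m y (\<lambda>\<alpha>. h \<alpha> + \<delta> * s0 \<alpha>))" by simp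
  also have "\<dots> \<le> (\<Sum>s\<in>signs. exp (tdot t m y (\<lambda>\<alpha>. h \<alpha> + \<delta> * s \<alpha>)))"
    by (rule member_le_sum[OF s0]) (auto simp: finite_signs)
  finally show ?thesis .
qed

lemma int_exp_tn:
  assumes nb: "\<And>h'. (\<forall>\<alpha><m. \<bar>h' \<alpha> - h \<alpha>\<bar> < \<epsilon>) \<Longrightarrow> h' \<in> nat_param_space \<nu> t m"
    and "0 \<le> \<delta>" "\<delta> < \<epsilon>"
  shows "integrable \<nu> (\<lambda>y. exp (tdot t m y h + \<delta> * tn y))"
proof (rule Bochner_Integration.integrable_bound)
  show "integrable \<nu> (\<lambda>y. \<Sum>s\<in>signs. exp (tdot t m y (\<lambda>\<alpha>. h \<alpha> + \<delta> * s \<alpha>)))"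
  proof (intro Bochner_Integration.integrable_sum int_exp nb allI impI)
    fix s \<alpha> assume "s \<in> signs" "\<alpha> < m"
    then have "s \<alpha> \<in> {-1, 1}" unfolding signs_def by auto
    then show "\<bar>h \<alpha> + \<delta> * s \<alpha> - h \<alpha>\<bar> < \<epsilon>" using assms by auto
  qed
  show "AE y in \<nu>. norm (exp (tdot t m y h + \<delta> * tn y)) \<le>
      norm (\<Sum>s\<in>signs. exp (tdot t m y (\<lambda>\<alpha>. h \<alpha> + \<delta> * s \<alpha>)))"
    using exp_tn_bound by (auto intro!: always_eventually simp: abs_of_nonneg sum_nonneg)
qed simp

definition V :: "nat fs set" where "V = {u. in_nat_interior \<nu> t m (fsr u)}"

lemma V_open: "open V"
  unfolding open_contains_ball
proof
  fix u assume "u \<in> V"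
  then obtain \<epsilon> where e: "\<epsilon> > 0" and nb: "\<And>h'. (\<forall>\<alpha><m. \<bar>h' \<alpha> - fsr u \<alpha>\<bar> < \<epsilon>) \<Longrightarrow> h' \<in> nat_param_space \<nu> t m"
    unfolding V_def in_nat_interior_def by blast
  show "\<exists>e>0. ball u e \<subseteq> V"
  proof (intro exI conjI subsetI)
    show "\<epsilon>/2 > 0" using e by simp
    fix u' assume "u' \<in> ball u (\<epsilon>/2)"
    then have d: "norm (u' - u) < \<epsilon>/2" by (simp add: dist_norm norm_minus_commute)
    have "\<bar>fsr u' \<alpha> - fsr u \<alpha>\<bar> < \<epsilon>/2" for \<alpha>
      using abs_fsr_le_norm[of "u' - u" \<alpha>] d by simp
    then show "u' \<in> V" unfolding V_def in_nat_interior_def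
    proof (intro CollectI exI[of _ "\<epsilon>/2"] conjI allI impI nb)
      fix h' \<alpha> assume a: "\<forall>\<alpha><m. \<bar>h' \<alpha> - fsr u' \<alpha>\<bar> < \<epsilon> / 2" and "\<alpha> < m"
      then have "\<bar>h' \<alpha> - fsr u' \<alpha>\<bar> < \<epsilon> / 2" by auto
      moreover assume "\<And>\<alpha>. \<bar>fsr u' \<alpha> - fsr u \<alpha>\<bar> < \<epsilon> / 2"
      then have "\<bar>fsr u' \<alpha> - fsr u \<alpha>\<bar> < \<epsilon> / 2" .
      ultimately show "\<bar>h' \<alpha> - fsr u \<alpha>\<bar> < \<epsilon>" by linarith
    qed (use e in auto)
  qed
qed

lemma V_good:
  assumes "u \<in> V"
  obtains \<delta> where "\<delta> > 0" "integrable \<nu> (\<lambda>y. exp (tdot t m y (fsr u) + \<delta> * tn y))"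
    "fsr u \<in> nat_param_space \<nu> t m"
proof -
  obtain \<epsilon> where e: "\<epsilon> > 0" and nb: "\<And>h'. (\<forall>\<alpha><m. \<bar>h' \<alpha> - fsr u \<alpha>\<bar> < \<epsilon>) \<Longrightarrow> h' \<in> nat_param_space \<nu> t m"
    using assms unfolding V_def in_nat_interior_def by blast
  show ?thesis
  proof (rule that[of "\<epsilon>/2"])
    show "integrable \<nu> (\<lambda>y. exp (tdot t m y (fsr u) + \<epsilon> / 2 * tn y))"
      by (rule int_exp_tn[OF nb]) (use e in auto)
  qed (use e nb in auto)
qed

lemma IB:
  assumes B: "integrable \<nu> (\<lambda>y. exp (tdot t m y h + \<delta> * tn y))" and d: "\<delta> > 0"
    and g: "g \<in> borel_measurable \<nu>" and \<rho>: "0 \<le> \<rho>" "\<rho> \<le> \<delta>/2"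
    and b: "\<And>y. \<bar>g y\<bar> \<le> C * tn y ^ j * exp (tdot t m y h + \<rho> * tn y)"
  shows "integrable \<nu> g"
proof (rule Bochner_Integration.integrable_bound)
  let ?K = "\<bar>C\<bar> * (fact j / (\<delta>/4) ^ j)"
  show "integrable \<nu> (\<lambda>y. ?K * exp (tdot t m y h + \<delta> * tn y))"
    using B by simp
  show "AE y in \<nu>. norm (g y) \<le> norm (?K * exp (tdot t m y h + \<delta> * tn y))"
  proof (intro always_eventually allI)
    fix y
    have p: "tn y ^ j \<le> fact j / (\<delta>/4) ^ j * exp (2 * (\<delta>/4) * tn y)"
      using d by (intro pow_le_exp_r tn_nonneg) auto
    have "\<bar>g y\<bar> \<le> \<bar>C\<bar> * tn y ^ j * exp (tdot t m y h + \<rho> * tn y)"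
    proof -
      have "0 \<le> tn y ^ j * exp (tdot t m y h + \<rho> * tn y)" using tn_nonneg by simp
      then have "C * (tn y ^ j * exp (tdot t m y h + \<rho> * tn y)) \<le> \<bar>C\<bar> * (tn y ^ j * exp (tdot t m y h + \<rho> * tn y))"
        by (intro mult_right_mono) auto
      then show ?thesis using b[of y] by (simp add: mult.assoc)
    qed
    also have "\<dots> \<le> \<bar>C\<bar> * (fact j / (\<delta>/4) ^ j * exp (2 * (\<delta>/4) * tn y)) * exp (tdot t m y h + \<rho> * tn y)"
      by (intro mult_right_mono mult_left_mono p) auto
    also have "\<dots> = ?K * exp (tdot t m y h + (\<rho> + \<delta>/2) * tn y)"
      by (simp add: mult_exp_exp[symmetric] algebra_simps)
    also have "\<dots> \<le> ?K * exp (tdot t m y h + \<delta> * tn y)"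
      using \<rho> tn_nonneg[of y] by (intro mult_left_mono) (auto intro!: mult_right_mono)
    finally show "norm (g y) \<le> norm (?K * exp (tdot t m y h + \<delta> * tn y))" using d by (simp add: abs_mult)
  qed
qed (fact g)

end


lemma abs_int_le:
  fixes f g :: "'a \<Rightarrow> real"
  assumes "integrable M f" "integrable M g" "\<And>x. x \<in> space M \<Longrightarrow> \<bar>f x\<bar> \<le> g x"
  shows "\<bar>\<integral>x. f x \<partial>M\<bar> \<le> (\<integral>x. g x \<partial>M)"
proof -
  have "\<bar>\<integral>x. f x \<partial>M\<bar> \<le> (\<integral>x. \<bar>f x\<bar> \<partial>M)"
    using integral_norm_bound[of M f] by simp
  also have "\<dots> \<le> (\<integral>x. g x \<partial>M)"
    using assms by (intro integral_mono) auto
  finally show ?thesis .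
qed

context ef
begin

lemma HDq:
  assumes u: "u \<in> V" and q[measurable]: "q \<in> borel_measurable \<nu>"
    and K: "0 \<le> K" and qb: "\<And>y. \<bar>q y\<bar> \<le> K * tn y ^ k"
  shows "((\<lambda>u. \<integral>y. q y * exp (tdot t m y (fsr u)) \<partial>\<nu>) has_derivative
          (\<lambda>w. \<integral>y. q y * tdot t m y (fsr w) * exp (tdot t m y (fsr u)) \<partial>\<nu>)) (at u)"
proof -
  obtain \<delta> where d: "\<delta> > 0" and B: "integrable \<nu> (\<lambda>y. exp (tdot t m y (fsr u) + \<delta> * tn y))"
    using V_good[OF u] by blast
  define r where "r = \<delta> / 4"
  have r: "0 < r" "r \<le> \<delta>/2" using d by (auto simp: r_def)
  define eu where "eu y = exp (tdot t m y (fsr u))" for y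
  have eu_pos: "0 < eu y" for y by (simp add: eu_def)
  have [measurable]: "eu \<in> borel_measurable \<nu>" unfolding eu_def by measurable
  define F where "F u' = (\<integral>y. q y * exp (tdot t m y (fsr u')) \<partial>\<nu>)" for u'
  define L where "L w = (\<integral>y. q y * tdot t m y (fsr w) * eu y \<partial>\<nu>)" for w
  have qtn: "0 \<le> K * tn y ^ k" for y using qb[of y] by linarith
  have int1: "integrable \<nu> (\<lambda>y. q y * tdot t m y (fsr w) * eu y)" for w
  proof (rule IB[OF B d _ order_refl, where C="K * norm w" and j="Suc k"])
    show "(\<lambda>y. q y * tdot t m y (fsr w) * eu y) \<in> borel_measurable \<nu>" by measurable
    show "0 \<le> \<delta>/2" using d by simp
    fix y
    have "\<bar>q y * tdot t m y (fsr w) * eu y\<bar> = \<bar>q y\<bar> * \<bar>tdot t m y (fsr w)\<bar> * eu y"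
      using eu_pos[of y] by (simp add: abs_mult)
    also have "\<dots> \<le> (K * tn y ^ k) * (tn y * norm w) * eu y"
      using eu_pos[of y] qtn[of y] by (intro mult_right_mono mult_mono qb tdot_bound) auto
    also have "\<dots> = K * norm w * tn y ^ Suc k * exp (tdot t m y (fsr u) + 0 * tn y)"
      by (simp add: eu_def)
    finally show "\<bar>q y * tdot t m y (fsr w) * eu y\<bar> \<le> K * norm w * tn y ^ Suc k * exp (tdot t m y (fsr u) + 0 * tn y)" .
  qed
  have int0: "integrable \<nu> (\<lambda>y. q y * exp (tdot t m y (fsr (u + w))))" if w: "norm w \<le> r" for w
  proof (rule IB[OF B d _ less_imp_le[OF r(1)] r(2), where C="K" and j="k"])
    show "(\<lambda>y. q y * exp (tdot t m y (fsr (u + w)))) \<in> borel_measurable \<nu>" by measurable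
    fix y
    have "tdot t m y (fsr w) \<le> r * tn y"
      using tdot_bound[of y w] w tn_nonneg[of y]
      by (smt (verit, ccfv_SIG) mult.commute mult_left_mono)
    then have "exp (tdot t m y (fsr (u + w))) \<le> exp (tdot t m y (fsr u) + r * tn y)"
      by (simp add: tdot_add)
    then have "\<bar>q y\<bar> * exp (tdot t m y (fsr (u + w))) \<le> (K * tn y ^ k) * exp (tdot t m y (fsr u) + r * tn y)"
      using qtn[of y] by (intro mult_mono qb) auto
    then show "\<bar>q y * exp (tdot t m y (fsr (u + w)))\<bar> \<le> K * tn y ^ k * exp (tdot t m y (fsr u) + r * tn y)"
      by (simp add: abs_mult)
  qed
  define K1 where "K1 = (\<integral>y. K * tn y ^ Suc k * eu y \<partial>\<nu>)"
  have intK1: "integrable \<nu> (\<lambda>y. K * tn y ^ Suc k * eu y)"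
    by (rule IB[OF B d _ order_refl, where C="K" and j="Suc k"])
       (use d K tn_nonneg eu_pos in \<open>auto simp: eu_def abs_mult\<close>)
  define K2 where "K2 = (\<integral>y. K * tn y ^ Suc (Suc k) * exp (tdot t m y (fsr u) + r * tn y) \<partial>\<nu>)"
  have intK2: "integrable \<nu> (\<lambda>y. K * tn y ^ Suc (Suc k) * exp (tdot t m y (fsr u) + r * tn y))"
    by (rule IB[OF B d _ less_imp_le[OF r(1)] r(2), where C="K" and j="Suc (Suc k)"])
       (use K tn_nonneg in \<open>auto simp: abs_mult\<close>)
  have K2: "0 \<le> K2" unfolding K2_def using K tn_nonneg by (intro integral_nonneg_AE) auto
  have bl: "bounded_linear L"
  proof (rule bounded_linear_intro[where K=K1])
    fix w1 w2
    show "L (w1 + w2) = L w1 + L w2"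
      unfolding L_def tdot_add using int1[of w1] int1[of w2]
      by (simp add: distrib_left distrib_right)
  next
    fix c w
    have "L (c *\<^sub>R w) = (\<integral>y. c * (q y * tdot t m y (fsr w) * eu y) \<partial>\<nu>)"
      unfolding L_def tdot_scale by (simp add: algebra_simps)
    then show "L (c *\<^sub>R w) = c *\<^sub>R L w" by (simp add: L_def)
  next
    fix w
    have "\<bar>L w\<bar> \<le> (\<integral>y. norm w * (K * tn y ^ Suc k * eu y) \<partial>\<nu>)"
      unfolding L_def
    proof (rule abs_int_le[OF int1])
      show "integrable \<nu> (\<lambda>y. norm w * (K * tn y ^ Suc k * eu y))" using intK1 by simp
      fix y
      have "\<bar>q y * tdot t m y (fsr w) * eu y\<bar> = \<bar>q y\<bar> * \<bar>tdot t m y (fsr w)\<bar> * eu y"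
        using eu_pos[of y] by (simp add: abs_mult)
      also have "\<dots> \<le> (K * tn y ^ k) * (tn y * norm w) * eu y"
        using eu_pos[of y] qtn[of y] by (intro mult_right_mono mult_mono qb tdot_bound) auto
      finally show "\<bar>q y * tdot t m y (fsr w) * eu y\<bar> \<le> norm w * (K * tn y ^ Suc k * eu y)"
        by (simp add: algebra_simps)
    qed
    also have "\<dots> = norm w * K1" unfolding K1_def by simp
    finally show "norm (L w) \<le> norm w * K1" by simp
  qed
  have rem: "\<bar>F (u + w) - F u - L w\<bar> \<le> K2 * (norm w)\<^sup>2" if w: "norm w < r" for w
  proof -
    have i0: "integrable \<nu> (\<lambda>y. q y * exp (tdot t m y (fsr u)))"
      using int0[of 0] r by simp
    have "F (u + w) - F u - L w =
        (\<integral>y. q y * exp (tdot t m y (fsr (u + w))) - q y * exp (tdot t m y (fsr u)) - q y * tdot t m y (fsr w) * eu y \<partial>\<nu>)"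
      unfolding F_def L_def using int0[of w] w i0 int1[of w] by simp
    also have "\<dots> = (\<integral>y. q y * eu y * (exp (tdot t m y (fsr w)) - 1 - tdot t m y (fsr w)) \<partial>\<nu>)"
      by (intro Bochner_Integration.integral_cong refl) (simp add: eu_def tdot_add exp_add algebra_simps)
    finally have eq: "F (u + w) - F u - L w = \<dots>" .
    have "\<bar>\<integral>y. q y * eu y * (exp (tdot t m y (fsr w)) - 1 - tdot t m y (fsr w)) \<partial>\<nu>\<bar>
        \<le> (\<integral>y. (norm w)\<^sup>2 * (K * tn y ^ Suc (Suc k) * exp (tdot t m y (fsr u) + r * tn y)) \<partial>\<nu>)"
    proof (rule abs_int_le)
      have "integrable \<nu> (\<lambda>y. q y * exp (tdot t m y (fsr (u + w))) - q y * exp (tdot t m y (fsr u)) - q y * tdot t m y (fsr w) * eu y)"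
        using int0[of w] w i0 int1[of w] by auto
      then show "integrable \<nu> (\<lambda>y. q y * eu y * (exp (tdot t m y (fsr w)) - 1 - tdot t m y (fsr w)))"
        by (rule Bochner_Integration.integrable_cong[THEN iffD1, rotated 2])
           (auto simp: eu_def tdot_add exp_add algebra_simps)
      show "integrable \<nu> (\<lambda>y. (norm w)\<^sup>2 * (K * tn y ^ Suc (Suc k) * exp (tdot t m y (fsr u) + r * tn y)))"
        using intK2 by simp
      fix y
      let ?x = "tdot t m y (fsr w)"
      have ax: "\<bar>?x\<bar> \<le> tn y * norm w" by (rule tdot_bound)
      have ax2: "\<bar>?x\<bar> \<le> r * tn y"
        using ax w tn_nonneg[of y] by (smt (verit, ccfv_SIG) mult.commute mult_left_mono)
      have "?x\<^sup>2 \<le> (tn y * norm w)\<^sup>2"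
        using ax by (metis abs_ge_zero power2_abs power_mono)
      have "\<bar>q y * eu y * (exp ?x - 1 - ?x)\<bar> = \<bar>q y\<bar> * eu y * \<bar>exp ?x - 1 - ?x\<bar>"
        using eu_pos[of y] by (simp add: abs_mult)
      also have "\<dots> \<le> (K * tn y ^ k) * eu y * (?x\<^sup>2 * exp \<bar>?x\<bar>)"
        using eu_pos[of y] qtn[of y] by (intro mult_mono qb exp_rem) auto
      also have "\<dots> \<le> (K * tn y ^ k) * eu y * ((tn y * norm w)\<^sup>2 * exp (r * tn y))"
        using eu_pos[of y] qtn[of y] \<open>?x\<^sup>2 \<le> (tn y * norm w)\<^sup>2\<close> ax2
        by (intro mult_left_mono mult_mono) auto
      also have "\<dots> = (norm w)\<^sup>2 * (K * tn y ^ Suc (Suc k) * exp (tdot t m y (fsr u) + r * tn y))"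
        by (simp add: eu_def exp_add power_mult_distrib power2_eq_square algebra_simps)
      finally show "\<bar>q y * eu y * (exp ?x - 1 - ?x)\<bar> \<le> (norm w)\<^sup>2 * (K * tn y ^ Suc (Suc k) * exp (tdot t m y (fsr u) + r * tn y))" .
    qed
    also have "\<dots> = K2 * (norm w)\<^sup>2" unfolding K2_def by simp
    finally show ?thesis using eq by simp
  qed
  have "(F has_derivative L) (at u)"
    unfolding has_derivative_at_alt
  proof (intro conjI allI impI bl)
    fix e :: real assume e: "e > 0"
    show "\<exists>d>0. \<forall>y. norm (y - u) < d \<longrightarrow> norm (F y - F u - L (y - u)) \<le> e * norm (y - u)"
    proof (intro exI[of _ "min r (e / (K2 + 1))"] conjI allI impI)
      show "0 < min r (e / (K2 + 1))" using r e K2 by simp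
      fix y assume y: "norm (y - u) < min r (e / (K2 + 1))"
      have "norm (F y - F u - L (y - u)) \<le> K2 * (norm (y - u))\<^sup>2"
        using rem[of "y - u"] y by simp
      also have "\<dots> = (K2 * norm (y - u)) * norm (y - u)" by (simp add: power2_eq_square)
      also have "\<dots> \<le> e * norm (y - u)"
      proof (intro mult_right_mono)
        have "K2 * norm (y - u) \<le> K2 * (e / (K2 + 1))"
          using y K2 by (intro mult_left_mono) auto
        also have "\<dots> \<le> e" using K2 e by (simp add: field_simps)
        finally show "K2 * norm (y - u) \<le> e" .
      qed simp
      finally show "norm (F y - F u - L (y - u)) \<le> e * norm (y - u)" .
    qed
  qed
  then show ?thesis unfolding F_def L_def eu_def .
qed

end

lemma C2on_cong: "C2on U f \<Longrightarrow> (\<And>v. v \<in> U \<Longrightarrow> f v = g v) \<Longrightarrow> C2on U g"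
proof -
  assume "C2on U f" and eq: "\<And>v. v \<in> U \<Longrightarrow> f v = g v"
  then obtain Df D2f where U: "open U" and f1: "\<And>v. v \<in> U \<Longrightarrow> (f has_derivative Df v) (at v)"
    and f2: "\<And>v w. v \<in> U \<Longrightarrow> ((\<lambda>u. Df u w) has_derivative D2f v w) (at v)"
    by (auto elim!: C2onE)
  show "C2on U g"
  proof (rule C2onI[OF U _ f2])
    fix v assume v: "v \<in> U"
    show "(g has_derivative Df v) (at v)"
      by (rule has_derivative_transform_within_open[OF f1[OF v] U v eq])
  qed
qed

lemma C2on_vec_comp:
  fixes F :: "'b fs \<Rightarrow> real" and H :: "'b \<Rightarrow> 'v::real_normed_vector \<Rightarrow> real"
  assumes CF: "C2on V F" and A: "finite A" and CH: "\<And>\<alpha>. \<alpha> \<in> A \<Longrightarrow> C2on UNIV (H \<alpha>)"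
  shows "C2on ((\<lambda>v. restr A (\<lambda>\<alpha>. H \<alpha> v)) -` V) (\<lambda>v. F (restr A (\<lambda>\<alpha>. H \<alpha> v)))"
proof -
  define Hv where "Hv v = restr A (\<lambda>\<alpha>. H \<alpha> v)" for v
  obtain DF D2F where V: "open V" and F1: "\<And>v. v \<in> V \<Longrightarrow> (F has_derivative DF v) (at v)"
    and F2: "\<And>v w. v \<in> V \<Longrightarrow> ((\<lambda>u. DF u w) has_derivative D2F v w) (at v)"
    using CF by (auto elim!: C2onE)
  have "\<forall>\<alpha>\<in>A. \<exists>p. (\<forall>v. (H \<alpha> has_derivative fst p v) (at v)) \<and>
      (\<forall>v w. ((\<lambda>u. fst p u w) has_derivative snd p v w) (at v))"
  proof
    fix \<alpha> assume "\<alpha> \<in> A"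
    from CH[OF this] obtain Df D2f where "\<And>v. (H \<alpha> has_derivative Df v) (at v)"
      "\<And>v w. ((\<lambda>u. Df u w) has_derivative D2f v w) (at v)" by (auto simp: C2on_def)
    then show "\<exists>p. (\<forall>v. (H \<alpha> has_derivative fst p v) (at v)) \<and>
      (\<forall>v w. ((\<lambda>u. fst p u w) has_derivative snd p v w) (at v))"
      by (intro exI[of _ "(Df, D2f)"]) auto
  qed
  from bchoice[OF this] obtain p where p0: "\<forall>\<alpha>\<in>A. (\<forall>v. (H \<alpha> has_derivative fst (p \<alpha>) v) (at v)) \<and>
      (\<forall>v w. ((\<lambda>u. fst (p \<alpha>) u w) has_derivative snd (p \<alpha>) v w) (at v))" by blast
  have p: "\<And>\<alpha> v. \<alpha> \<in> A \<Longrightarrow> (H \<alpha> has_derivative fst (p \<alpha>) v) (at v)"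
    "\<And>\<alpha> v w. \<alpha> \<in> A \<Longrightarrow> ((\<lambda>u. fst (p \<alpha>) u w) has_derivative snd (p \<alpha>) v w) (at v)"
    using p0 by blast+
  define DH where "DH \<alpha> = fst (p \<alpha>)" for \<alpha>
  define D2H where "D2H \<alpha> = snd (p \<alpha>)" for \<alpha>
  note H1 = p(1)[folded DH_def] and H2 = p(2)[folded DH_def D2H_def]
  define DHv where "DHv v w = (\<Sum>\<alpha>\<in>A. DH \<alpha> v w *\<^sub>R ee \<alpha>)" for v w
  have Hv_sum: "Hv = (\<lambda>v. \<Sum>\<alpha>\<in>A. H \<alpha> v *\<^sub>R ee \<alpha>)"
    by (auto simp: Hv_def restr_sum[OF A])
  have Hvd: "(Hv has_derivative DHv v) (at v)" for v
    unfolding Hv_sum DHv_def by (intro has_derivative_sum has_derivative_scaleR_left H1)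
  have opn: "open (Hv -` V)"
    by (rule continuous_open_vimage[OF V has_derivative_continuous[OF Hvd]])
  show ?thesis
    unfolding Hv_def[symmetric]
  proof (rule C2onI[OF opn, where Df="\<lambda>v w. \<Sum>\<alpha>\<in>A. DH \<alpha> v w * DF (Hv v) (ee \<alpha>)"
        and D2f="\<lambda>v w z. \<Sum>\<alpha>\<in>A. DH \<alpha> v w * D2F (Hv v) (ee \<alpha>) (DHv v z) + D2H \<alpha> v w z * DF (Hv v) (ee \<alpha>)"])
    fix v assume v: "v \<in> Hv -` V"
    have c: "((\<lambda>v. F (Hv v)) has_derivative (\<lambda>w. DF (Hv v) (DHv v w))) (at v)"
      using has_derivative_compose[OF Hvd F1] v by auto
    show "((\<lambda>v. F (Hv v)) has_derivative (\<lambda>w. \<Sum>\<alpha>\<in>A. DH \<alpha> v w * DF (Hv v) (ee \<alpha>))) (at v)"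
      using c v unfolding DHv_def
      by (simp add: lin_sum_scale[OF has_derivative_linear[OF F1[of "Hv v"]] A])
    fix w
    have d1: "((\<lambda>u. DF (Hv u) (ee \<alpha>)) has_derivative (\<lambda>z. D2F (Hv v) (ee \<alpha>) (DHv v z))) (at v)" for \<alpha>
      using has_derivative_compose[OF Hvd F2] v by auto
    show "((\<lambda>u. \<Sum>\<alpha>\<in>A. DH \<alpha> u w * DF (Hv u) (ee \<alpha>)) has_derivative
        (\<lambda>z. \<Sum>\<alpha>\<in>A. DH \<alpha> v w * D2F (Hv v) (ee \<alpha>) (DHv v z) + D2H \<alpha> v w z * DF (Hv v) (ee \<alpha>))) (at v)"
      by (intro has_derivative_sum has_derivative_mult d1 H2)
  qed
qed

context ef
begin

definition Zr :: "nat fs \<Rightarrow> real" where "Zr u = (\<integral>y. exp (tdot t m y (fsr u)) \<partial>\<nu>)"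

lemma Zr_C2: "C2on V Zr"
proof (rule C2onI[OF V_open, where Df="\<lambda>u w. \<integral>y. tdot t m y (fsr w) * exp (tdot t m y (fsr u)) \<partial>\<nu>"
      and D2f="\<lambda>u w w'. \<integral>y. tdot t m y (fsr w) * tdot t m y (fsr w') * exp (tdot t m y (fsr u)) \<partial>\<nu>"])
  fix u assume u: "u \<in> V"
  show "(Zr has_derivative (\<lambda>w. \<integral>y. tdot t m y (fsr w) * exp (tdot t m y (fsr u)) \<partial>\<nu>)) (at u)"
    using HDq[OF u, of "\<lambda>_. 1" 1 0] unfolding Zr_def[abs_def] by simp
  fix w
  show "((\<lambda>u. \<integral>y. tdot t m y (fsr w) * exp (tdot t m y (fsr u)) \<partial>\<nu>) has_derivative
        (\<lambda>w'. \<integral>y. tdot t m y (fsr w) * tdot t m y (fsr w') * exp (tdot t m y (fsr u)) \<partial>\<nu>)) (at u)"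
  proof (rule HDq[OF u, of _ "norm w" 1])
    fix y show "\<bar>tdot t m y (fsr w)\<bar> \<le> norm w * tn y ^ 1"
      using tdot_bound[of y w] by (simp add: mult.commute)
  qed auto
qed

lemma V_param: "u \<in> V \<Longrightarrow> fsr u \<in> nat_param_space \<nu> t m"
  using V_good by blast

lemma logpart_C2: "C2on V (\<lambda>u. logpart \<nu> t m (fsr u))"
proof -
  have pos: "u \<in> V \<Longrightarrow> 0 < Zr u" for u
    using Zpart_eq(2)[OF V_param] by (simp add: Zr_def)
  have "C2on V (\<lambda>u. ln (Zr u))"
  proof (rule C2on_compose[OF Zr_C2, where \<phi>'=inverse and \<phi>''="\<lambda>x. - (inverse x ^ Suc (Suc 0))"])
    fix u assume "u \<in> V"
    then have "0 < Zr u" by (rule pos)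
    then show "(ln has_real_derivative inverse (Zr u)) (at (Zr u))"
      by (rule DERIV_ln)
    from \<open>0 < Zr u\<close> show "(inverse has_real_derivative - (inverse (Zr u) ^ Suc (Suc 0))) (at (Zr u))"
      by (intro DERIV_inverse) simp
  qed
  then show ?thesis
    by (rule C2on_cong) (simp add: Zpart_eq(3)[OF V_param] Zr_def)
qed

lemma Zpart_cong: "(\<And>\<alpha>. \<alpha> < m \<Longrightarrow> h \<alpha> = h' \<alpha>) \<Longrightarrow> Zpart \<nu> t m h = Zpart \<nu> t m h'"
  unfolding Zpart_def by (simp add: tdot_cong[of h h'])

lemma logpart_cong: "(\<And>\<alpha>. \<alpha> < m \<Longrightarrow> h \<alpha> = h' \<alpha>) \<Longrightarrow> logpart \<nu> t m h = logpart \<nu> t m h'"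
  unfolding logpart_def by (simp add: Zpart_cong[of h h'])

lemma interior_cong: "(\<And>\<alpha>. \<alpha> < m \<Longrightarrow> h \<alpha> = h' \<alpha>) \<Longrightarrow> in_nat_interior \<nu> t m h = in_nat_interior \<nu> t m h'"
  unfolding in_nat_interior_def by simp

end


definition L2 :: "'a measure \<Rightarrow> ('a \<Rightarrow> real) \<Rightarrow> bool" where
  "L2 M f \<longleftrightarrow> f \<in> borel_measurable M \<and> integrable M (\<lambda>x. (f x)\<^sup>2)"

lemma L2_mult: "L2 M f \<Longrightarrow> L2 M g \<Longrightarrow> integrable M (\<lambda>x. f x * g x)"
proof -
  assume f: "L2 M f" and g: "L2 M g"
  show ?thesis
  proof (rule Bochner_Integration.integrable_bound)
    show "integrable M (\<lambda>x. (f x)\<^sup>2 + (g x)\<^sup>2)" using f g by (auto simp: L2_def)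
    show "(\<lambda>x. f x * g x) \<in> borel_measurable M" using f g by (auto simp: L2_def)
    show "AE x in M. norm (f x * g x) \<le> norm ((f x)\<^sup>2 + (g x)\<^sup>2)"
    proof (intro always_eventually allI)
      fix x
      have "2 * \<bar>f x\<bar> * \<bar>g x\<bar> \<le> \<bar>f x\<bar>\<^sup>2 + \<bar>g x\<bar>\<^sup>2"
        by (rule sum_squares_bound)
      then have "2 * \<bar>f x * g x\<bar> \<le> (f x)\<^sup>2 + (g x)\<^sup>2"
        by (simp add: abs_mult mult.assoc)
      then show "norm (f x * g x) \<le> norm ((f x)\<^sup>2 + (g x)\<^sup>2)" by simp
    qed
  qed
qed

lemma (in prob_space) L2_int: "L2 M f \<Longrightarrow> integrable M f"
proof -
  assume f: "L2 M f"
  have "L2 M (\<lambda>_. 1)" by (simp add: L2_def)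
  from L2_mult[OF f this] show ?thesis by simp
qed

lemma L2_add: "L2 M f \<Longrightarrow> L2 M g \<Longrightarrow> L2 M (\<lambda>x. f x + g x)"
proof -
  assume f: "L2 M f" and g: "L2 M g"
  have "integrable M (\<lambda>x. (f x)\<^sup>2 + (g x)\<^sup>2 + 2 * (f x * g x))"
    using L2_mult[OF f g] f g unfolding L2_def
    by (intro Bochner_Integration.integrable_add integrable_mult_right) auto
  then show ?thesis using f g unfolding L2_def power2_sum by (simp add: mult.assoc borel_measurable_add)
qed

lemma L2_cmult: "L2 M f \<Longrightarrow> L2 M (\<lambda>x. c * f x)"
  unfolding L2_def by (auto simp: power_mult_distrib)

lemma L2_sum: "(\<And>i. i \<in> I \<Longrightarrow> L2 M (f i)) \<Longrightarrow> L2 M (\<lambda>x. \<Sum>i\<in>I. f i x)"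
proof (induction I rule: infinite_finite_induct)
  case (insert i I)
  then show ?case by (simp add: L2_add)
qed (simp_all add: L2_def)

lemma (in prob_space) L2_const: "L2 M (\<lambda>_. c)"
  by (simp add: L2_def)

lemma (in prob_space) cov_eq:
  assumes "integrable M X" "integrable M Y" "integrable M (\<lambda>x. X x * Y x)"
  shows "cov M X Y = expectation (\<lambda>x. X x * Y x) - expectation X * expectation Y"
proof -
  have "cov M X Y = (\<integral>x. X x * Y x - expectation Y * X x - expectation X * Y x + expectation X * expectation Y \<partial>M)"
    unfolding cov_def by (simp add: algebra_simps)
  also have "\<dots> = expectation (\<lambda>x. X x * Y x) - expectation Y * expectation X - expectation X * expectation Y
      + expectation X * expectation Y"
    using assms by (simp add: prob_space)
  finally show ?thesis by (simp add: algebra_simps)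
qed

lemma (in prob_space) cov_L2:
  assumes "L2 M X" "L2 M Y"
  shows "cov M X Y = expectation (\<lambda>x. X x * Y x) - expectation X * expectation Y"
  using assms by (intro cov_eq L2_int L2_mult)

lemma (in prob_space) cov_bilin:
  assumes I: "finite I" and J: "finite J" and X: "\<And>i. i \<in> I \<Longrightarrow> L2 M (X i)" and Y: "\<And>j. j \<in> J \<Longrightarrow> L2 M (Y j)"
  shows "cov M (\<lambda>x. \<Sum>i\<in>I. a i * X i x) (\<lambda>x. \<Sum>j\<in>J. b j * Y j x) =
    (\<Sum>i\<in>I. \<Sum>j\<in>J. a i * b j * cov M (X i) (Y j))"
proof -
  have LX: "L2 M (\<lambda>x. \<Sum>i\<in>I. a i * X i x)" by (intro L2_sum L2_cmult X)
  have LY: "L2 M (\<lambda>x. \<Sum>j\<in>J. b j * Y j x)" by (intro L2_sum L2_cmult Y)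
  have iX: "\<And>i. i \<in> I \<Longrightarrow> integrable M (X i)" using X L2_int by blast
  have iY: "\<And>j. j \<in> J \<Longrightarrow> integrable M (Y j)" using Y L2_int by blast
  have iXY: "\<And>i j. i \<in> I \<Longrightarrow> j \<in> J \<Longrightarrow> integrable M (\<lambda>x. X i x * Y j x)" using X Y L2_mult by blast
  have e1: "expectation (\<lambda>x. (\<Sum>i\<in>I. a i * X i x) * (\<Sum>j\<in>J. b j * Y j x))
      = (\<Sum>i\<in>I. \<Sum>j\<in>J. a i * b j * expectation (\<lambda>x. X i x * Y j x))"
  proof -
    have "expectation (\<lambda>x. (\<Sum>i\<in>I. a i * X i x) * (\<Sum>j\<in>J. b j * Y j x))
      = expectation (\<lambda>x. \<Sum>i\<in>I. \<Sum>j\<in>J. a i * b j * (X i x * Y j x))"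
      unfolding sum_product by (simp add: ac_simps)
    also have "\<dots> = (\<Sum>i\<in>I. expectation (\<lambda>x. \<Sum>j\<in>J. a i * b j * (X i x * Y j x)))"
      using iXY by (intro Bochner_Integration.integral_sum Bochner_Integration.integrable_sum integrable_mult_right) auto
    also have "\<dots> = (\<Sum>i\<in>I. \<Sum>j\<in>J. a i * b j * expectation (\<lambda>x. X i x * Y j x))"
      using iXY by (intro sum.cong refl) (simp add: Bochner_Integration.integral_sum)
    finally show ?thesis .
  qed
  have e2: "expectation (\<lambda>x. \<Sum>i\<in>I. a i * X i x) = (\<Sum>i\<in>I. a i * expectation (X i))"
    using iX by (simp add: Bochner_Integration.integral_sum)
  have e3: "expectation (\<lambda>x. \<Sum>j\<in>J. b j * Y j x) = (\<Sum>j\<in>J. b j * expectation (Y j))"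
    using iY by (simp add: Bochner_Integration.integral_sum)
  have e4: "(\<Sum>i\<in>I. a i * expectation (X i)) * (\<Sum>j\<in>J. b j * expectation (Y j))
     = (\<Sum>i\<in>I. \<Sum>j\<in>J. a i * b j * (expectation (X i) * expectation (Y j)))"
    unfolding sum_product by (simp add: ac_simps)
  have "(\<Sum>i\<in>I. \<Sum>j\<in>J. a i * b j * cov M (X i) (Y j)) =
      (\<Sum>i\<in>I. \<Sum>j\<in>J. a i * b j * expectation (\<lambda>x. X i x * Y j x) - a i * b j * (expectation (X i) * expectation (Y j)))"
    using X Y by (intro sum.cong refl) (simp add: cov_L2 right_diff_distrib)
  also have "\<dots> = (\<Sum>i\<in>I. \<Sum>j\<in>J. a i * b j * expectation (\<lambda>x. X i x * Y j x)) -
      (\<Sum>i\<in>I. \<Sum>j\<in>J. a i * b j * (expectation (X i) * expectation (Y j)))"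
    by (simp add: sum_subtractf)
  finally show ?thesis
    unfolding cov_L2[OF LX LY] e1 e2 e3 e4 by simp
qed

lemma (in prob_space) cov_add_const:
  assumes "integrable M X" "integrable M Y"
  shows "cov M (\<lambda>x. X x + c) (\<lambda>x. Y x + d) = cov M X Y"
  unfolding cov_def using assms by (simp add: prob_space)


locale iid = prob_space \<mu> for \<mu> :: "'y measure" +
  fixes N :: nat
  assumes N: "0 < N"
begin

definition S :: "(nat \<Rightarrow> 'y) measure" where "S = PiM {..<N} (\<lambda>_. \<mu>)"

lemma S_prob: "prob_space S"
  unfolding S_def by (intro prob_space_PiM) (simp add: prob_space_axioms)

lemma distr_comp: "s < N \<Longrightarrow> distr S \<mu> (\<lambda>x. x s) = \<mu>"
  unfolding S_def by (rule distr_PiM_component) (auto simp: prob_space_axioms)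

lemma meas_comp: "s < N \<Longrightarrow> (\<lambda>x. x s) \<in> measurable S \<mu>"
  unfolding S_def by (rule measurable_component_singleton) simp

lemma comp_int: fixes f :: "'y \<Rightarrow> real" shows "s < N \<Longrightarrow> f \<in> borel_measurable \<mu> \<Longrightarrow> integrable S (\<lambda>x. f (x s)) \<longleftrightarrow> integrable \<mu> f"
proof -
  assume s: "s < N" and f: "f \<in> borel_measurable \<mu>"
  have "integrable (distr S \<mu> (\<lambda>x. x s)) f = integrable S (\<lambda>x. f (x s))"
    by (rule integrable_distr_eq[OF meas_comp[OF s] f])
  then show ?thesis unfolding distr_comp[OF s] by (rule sym)
qed

lemma comp_integral: fixes f :: "'y \<Rightarrow> real" shows "s < N \<Longrightarrow> f \<in> borel_measurable \<mu> \<Longrightarrow> (\<integral>x. f (x s) \<partial>S) = (\<integral>y. f y \<partial>\<mu>)"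
  using integral_distr[OF meas_comp, of s f] distr_comp by (simp only:)

lemma comp_L2: "s < N \<Longrightarrow> L2 \<mu> f \<Longrightarrow> L2 S (\<lambda>x. f (x s))"
proof -
  assume s: "s < N" and f: "L2 \<mu> f"
  have fm: "f \<in> borel_measurable \<mu>" and fi: "integrable \<mu> (\<lambda>y. (f y)\<^sup>2)" using f by (auto simp: L2_def)
  have m: "(\<lambda>x. f (x s)) \<in> borel_measurable S"
    using measurable_comp[OF meas_comp[OF s] fm] by (simp add: o_def)
  have fm2: "(\<lambda>y. (f y)\<^sup>2) \<in> borel_measurable \<mu>" using fm by measurable
  have "integrable S (\<lambda>x. (f (x s))\<^sup>2)"
    using comp_int[OF s fm2] fi by (rule iffD2)
  with m show ?thesis unfolding L2_def by (rule conjI)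
qed

lemma comp_indep:
  fixes f g :: "'y \<Rightarrow> real"
  assumes s: "s < N" "s' < N" "s \<noteq> s'" and f: "integrable \<mu> f" and g: "integrable \<mu> g"
  shows "(\<integral>x. f (x s) * g (x s') \<partial>S) = (\<integral>y. f y \<partial>\<mu>) * (\<integral>y. g y \<partial>\<mu>)"
proof -
  interpret ps: product_sigma_finite "\<lambda>_. \<mu>"
    by (simp add: product_sigma_finite_def prob_space_imp_sigma_finite prob_space_axioms)
  define F where "F i = (if i = s then f else if i = s' then g else (\<lambda>_. 1))" for i
  have intF: "i \<in> {..<N} \<Longrightarrow> integrable \<mu> (F i)" for i using f g by (auto simp: F_def)
  have pr: "(\<Prod>i\<in>{..<N}. F i (x i)) = f (x s) * g (x s')" for x
  proof -
    have "(\<Prod>i\<in>{..<N}. F i (x i)) = F s (x s) * (\<Prod>i\<in>{..<N} - {s}. F i (x i))"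
      using s by (subst prod.remove[of _ s]) auto
    also have "(\<Prod>i\<in>{..<N} - {s}. F i (x i)) = F s' (x s') * (\<Prod>i\<in>{..<N} - {s} - {s'}. F i (x i))"
      using s by (subst prod.remove[of _ s']) auto
    also have "(\<Prod>i\<in>{..<N} - {s} - {s'}. F i (x i)) = 1"
      by (intro prod.neutral) (auto simp: F_def)
    finally show ?thesis using s by (simp add: F_def)
  qed
  have "(\<integral>x. (\<Prod>i\<in>{..<N}. F i (x i)) \<partial>S) = (\<Prod>i\<in>{..<N}. integral\<^sup>L \<mu> (F i))"
    unfolding S_def by (rule ps.product_integral_prod) (auto intro: intF)
  also have "\<dots> = (\<integral>y. f y \<partial>\<mu>) * (\<integral>y. g y \<partial>\<mu>)"
  proof -
    have "(\<Prod>i\<in>{..<N}. integral\<^sup>L \<mu> (F i)) = integral\<^sup>L \<mu> (F s) * (\<Prod>i\<in>{..<N} - {s}. integral\<^sup>L \<mu> (F i))"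
      using s by (subst prod.remove[of _ s]) auto
    also have "(\<Prod>i\<in>{..<N} - {s}. integral\<^sup>L \<mu> (F i)) = integral\<^sup>L \<mu> (F s') * (\<Prod>i\<in>{..<N} - {s} - {s'}. integral\<^sup>L \<mu> (F i))"
      using s by (subst prod.remove[of _ s']) auto
    also have "(\<Prod>i\<in>{..<N} - {s} - {s'}. integral\<^sup>L \<mu> (F i)) = 1"
      by (intro prod.neutral) (auto simp: F_def prob_space)
    finally show ?thesis using s by (simp add: F_def)
  qed
  finally show ?thesis by (simp add: pr)
qed

lemma Lcov:
  assumes u: "L2 \<mu> u" and v: "L2 \<mu> v"
  shows "cov S (\<lambda>x. (1 / real N) * (\<Sum>s<N. u (x s))) (\<lambda>x. (1 / real N) * (\<Sum>s<N. v (x s)))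
       = (1 / real N) * cov \<mu> u v"
proof -
  interpret Sp: prob_space S by (rule S_prob)
  have um: "u \<in> borel_measurable \<mu>" and vm: "v \<in> borel_measurable \<mu>" using u v by (auto simp: L2_def)
  have iu: "integrable \<mu> u" and iv: "integrable \<mu> v" and iuv: "integrable \<mu> (\<lambda>y. u y * v y)"
    using u v by (auto intro: L2_int L2_mult)
  have LU: "L2 S (\<lambda>x. \<Sum>s<N. 1 / real N * u (x s))"
    by (intro L2_sum L2_cmult comp_L2 u) auto
  have LV: "L2 S (\<lambda>x. \<Sum>s<N. 1 / real N * v (x s))"
    by (intro L2_sum L2_cmult comp_L2 v) auto
  have cS: "cov S (\<lambda>x. \<Sum>s<N. 1 / real N * u (x s)) (\<lambda>x. \<Sum>s<N. 1 / real N * v (x s))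
      = (\<Sum>s<N. \<Sum>s'<N. 1 / real N * (1 / real N) * cov S (\<lambda>x. u (x s)) (\<lambda>x. v (x s')))"
    by (rule Sp.cov_bilin) (auto intro: comp_L2 u v)
  have cc: "cov S (\<lambda>x. u (x s)) (\<lambda>x. v (x s')) = (if s = s' then cov \<mu> u v else 0)"
    if s: "s < N" "s' < N" for s s'
  proof -
    have "cov S (\<lambda>x. u (x s)) (\<lambda>x. v (x s')) =
        (\<integral>x. u (x s) * v (x s') \<partial>S) - (\<integral>x. u (x s) \<partial>S) * (\<integral>x. v (x s') \<partial>S)"
      using s by (intro Sp.cov_L2 comp_L2 u v)
    also have "\<dots> = (if s = s' then (\<integral>y. u y * v y \<partial>\<mu>) else (\<integral>y. u y \<partial>\<mu>) * (\<integral>y. v y \<partial>\<mu>))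
        - (\<integral>y. u y \<partial>\<mu>) * (\<integral>y. v y \<partial>\<mu>)"
    proof (cases "s = s'")
      case True
      have "(\<integral>x. u (x s) * v (x s') \<partial>S) = (\<integral>y. u y * v y \<partial>\<mu>)"
        using comp_integral[of s "\<lambda>y. u y * v y"] s um vm True by simp
      then show ?thesis using True comp_integral[of s' v] comp_integral[of s u] s um vm by simp
    next
      case False
      then show ?thesis using comp_integral[of s' v] comp_integral[of s u] s um vm
        comp_indep[OF s(1,2) False iu iv] by simp
    qed
    also have "\<dots> = (if s = s' then cov \<mu> u v else 0)"
      using cov_L2[OF u v] by simp
    finally show ?thesis .
  qed
  have "(\<Sum>s<N. \<Sum>s'<N. 1 / real N * (1 / real N) * cov S (\<lambda>x. u (x s)) (\<lambda>x. v (x s')))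
      = (\<Sum>s<N. 1 / real N * (1 / real N) * cov \<mu> u v)"
  proof (intro sum.cong refl)
    fix s assume s: "s \<in> {..<N}"
    have "(\<Sum>s'<N. 1 / real N * (1 / real N) * cov S (\<lambda>x. u (x s)) (\<lambda>x. v (x s')))
       = (\<Sum>s'<N. (if s = s' then 1 / real N * (1 / real N) * cov \<mu> u v else 0))"
      using s by (intro sum.cong refl) (simp add: cc)
    also have "\<dots> = 1 / real N * (1 / real N) * cov \<mu> u v"
      using s by (simp add: sum.delta)
    finally show "(\<Sum>s'<N. 1 / real N * (1 / real N) * cov S (\<lambda>x. u (x s)) (\<lambda>x. v (x s'))) = 1 / real N * (1 / real N) * cov \<mu> u v" .
  qed
  also have "\<dots> = 1 / real N * cov \<mu> u v" using N by simp
  finally show ?thesis using cS by (simp add: sum_distrib_left)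
qed

end


context ef
begin

definition PB :: "('y \<Rightarrow> real) \<Rightarrow> bool" where
  "PB f \<longleftrightarrow> f \<in> borel_measurable \<nu> \<and> (\<exists>C k. 0 \<le> C \<and> (\<forall>y. \<bar>f y\<bar> \<le> C * (1 + tn y) ^ k))"

lemma one_tn: "1 \<le> 1 + tn y" using tn_nonneg[of y] by simp

lemma PB_const: "PB (\<lambda>_. c)"
  unfolding PB_def by (intro conjI exI[of _ "\<bar>c\<bar>"] exI[of _ 0]) auto

lemma PB_t: "\<alpha> < m \<Longrightarrow> PB (\<lambda>y. t y \<alpha>)"
  unfolding PB_def
proof (intro conjI exI[of _ 1] exI[of _ 1] allI)
  fix y assume "\<alpha> < m"
  then have "\<bar>t y \<alpha>\<bar> \<le> tn y" unfolding tn_def by (intro member_le_sum) auto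
  then show "\<bar>t y \<alpha>\<bar> \<le> 1 * (1 + tn y) ^ 1" by simp
qed (auto intro: tm)

lemma PB_mult: "PB f \<Longrightarrow> PB g \<Longrightarrow> PB (\<lambda>y. f y * g y)"
proof -
  assume f: "PB f" and g: "PB g"
  then obtain C1 k1 C2 k2 where C: "0 \<le> C1" "0 \<le> C2" and b1: "\<And>y. \<bar>f y\<bar> \<le> C1 * (1 + tn y) ^ k1"
    and b2: "\<And>y. \<bar>g y\<bar> \<le> C2 * (1 + tn y) ^ k2" unfolding PB_def by blast
  show ?thesis unfolding PB_def
  proof (intro conjI exI[of _ "C1 * C2"] exI[of _ "k1 + k2"] allI)
    fix y
    have "\<bar>f y * g y\<bar> \<le> (C1 * (1 + tn y) ^ k1) * (C2 * (1 + tn y) ^ k2)"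
      unfolding abs_mult by (intro mult_mono b1 b2) (use C tn_nonneg in auto)
    then show "\<bar>f y * g y\<bar> \<le> C1 * C2 * (1 + tn y) ^ (k1 + k2)" by (simp add: power_add algebra_simps)
  qed (use f g C in \<open>auto simp: PB_def\<close>)
qed

lemma PB_add: "PB f \<Longrightarrow> PB g \<Longrightarrow> PB (\<lambda>y. f y + g y)"
proof -
  assume f: "PB f" and g: "PB g"
  then obtain C1 k1 C2 k2 where C: "0 \<le> C1" "0 \<le> C2" and b1: "\<And>y. \<bar>f y\<bar> \<le> C1 * (1 + tn y) ^ k1"
    and b2: "\<And>y. \<bar>g y\<bar> \<le> C2 * (1 + tn y) ^ k2" unfolding PB_def by blast
  show ?thesis unfolding PB_def
  proof (intro conjI exI[of _ "C1 + C2"] exI[of _ "k1 + k2"] allI)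
    fix y
    have p1: "(1 + tn y) ^ k1 \<le> (1 + tn y) ^ (k1 + k2)" by (intro power_increasing one_tn) auto
    have p2: "(1 + tn y) ^ k2 \<le> (1 + tn y) ^ (k1 + k2)" by (intro power_increasing one_tn) auto
    have "\<bar>f y + g y\<bar> \<le> C1 * (1 + tn y) ^ k1 + C2 * (1 + tn y) ^ k2"
      using b1[of y] b2[of y] by linarith
    also have "\<dots> \<le> C1 * (1 + tn y) ^ (k1 + k2) + C2 * (1 + tn y) ^ (k1 + k2)"
      using C by (intro add_mono mult_left_mono p1 p2) auto
    finally show "\<bar>f y + g y\<bar> \<le> (C1 + C2) * (1 + tn y) ^ (k1 + k2)" by (simp add: algebra_simps)
  qed (use f g C in \<open>auto simp: PB_def\<close>)
qed

lemma PB_cmult: "PB f \<Longrightarrow> PB (\<lambda>y. c * f y)"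
  using PB_mult[OF PB_const] .

lemma PB_diff: "PB f \<Longrightarrow> PB g \<Longrightarrow> PB (\<lambda>y. f y - g y)"
  using PB_add[of f "\<lambda>y. (-1) * g y"] PB_cmult[of g "-1"] by simp

lemma PB_sum: "(\<And>i. i \<in> I \<Longrightarrow> PB (f i)) \<Longrightarrow> PB (\<lambda>y. \<Sum>i\<in>I. f i y)"
proof (induction I rule: infinite_finite_induct)
  case (insert i I)
  then show ?case by (simp add: PB_add)
qed (simp_all add: PB_const)

context
  fixes h assumes hint: "in_nat_interior \<nu> t m h"
begin

lemma h_param: "h \<in> nat_param_space \<nu> t m"
  using hint unfolding in_nat_interior_def by force

definition Iz where "Iz = (\<integral>y. exp (tdot t m y h) \<partial>\<nu>)"

lemma Iz_pos: "0 < Iz" unfolding Iz_def by (rule Zpart_eq(2)[OF h_param])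

lemma dens_eq: "expfam_dens \<nu> t m h y = exp (tdot t m y h) / Iz"
  unfolding expfam_dens_def Zpart_eq(3)[OF h_param] Iz_def[symmetric]
  using Iz_pos by (simp add: exp_diff)

lemma dens_meas[measurable]: "(\<lambda>y. expfam_dens \<nu> t m h y) \<in> borel_measurable \<nu>"
  unfolding dens_eq by measurable

lemma expfam_prob: "prob_space (expfam \<nu> t m h)"
proof
  have "emeasure (expfam \<nu> t m h) (space (expfam \<nu> t m h)) = (\<integral>\<^sup>+ y. ennreal (expfam_dens \<nu> t m h y) \<partial>\<nu>)"
    unfolding expfam_def by (simp add: emeasure_density)
  also have "\<dots> = ennreal (\<integral>y. exp (tdot t m y h) / Iz \<partial>\<nu>)"
    unfolding dens_eq using int_exp[OF h_param] Iz_pos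
    by (intro nn_integral_eq_integral) auto
  also have "\<dots> = 1"
    using Iz_pos by (simp add: Iz_def[symmetric])
  finally show "emeasure (expfam \<nu> t m h) (space (expfam \<nu> t m h)) = 1" .
qed

lemma meas_expfam: "f \<in> borel_measurable \<nu> \<Longrightarrow> f \<in> borel_measurable (expfam \<nu> t m h)"
  unfolding expfam_def by (simp add: measurable_cong_sets[OF sets_density refl])

lemma PB_int:
  assumes f: "PB f"
  shows "integrable (expfam \<nu> t m h) f"
proof -
  obtain C k where C: "0 \<le> C" and fb: "\<And>y. \<bar>f y\<bar> \<le> C * (1 + tn y) ^ k" and fm[measurable]: "f \<in> borel_measurable \<nu>"
    using f unfolding PB_def by blast
  obtain \<epsilon> where e: "\<epsilon> > 0" and nb: "\<And>h'. (\<forall>\<alpha><m. \<bar>h' \<alpha> - h \<alpha>\<bar> < \<epsilon>) \<Longrightarrow> h' \<in> nat_param_space \<nu> t m"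
    using hint unfolding in_nat_interior_def by blast
  define \<delta> where "\<delta> = \<epsilon> / 2"
  have d: "0 < \<delta>" "\<delta> < \<epsilon>" using e by (auto simp: \<delta>_def)
  have B: "integrable \<nu> (\<lambda>y. exp (tdot t m y h + \<delta> * tn y))"
    by (rule int_exp_tn[OF nb]) (use d in auto)
  define K where "K = C * (fact k / (\<delta>/2) ^ k) * exp \<delta> / Iz"
  have "integrable \<nu> (\<lambda>y. expfam_dens \<nu> t m h y *\<^sub>R f y)"
  proof (rule Bochner_Integration.integrable_bound)
    show "integrable \<nu> (\<lambda>y. K * exp (tdot t m y h + \<delta> * tn y))" using B by simp
    show "(\<lambda>y. expfam_dens \<nu> t m h y *\<^sub>R f y) \<in> borel_measurable \<nu>" by measurable
    show "AE y in \<nu>. norm (expfam_dens \<nu> t m h y *\<^sub>R f y) \<le> norm (K * exp (tdot t m y h + \<delta> * tn y))"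
    proof (intro always_eventually allI)
      fix y
      have p: "(1 + tn y) ^ k \<le> fact k / (\<delta>/2) ^ k * exp (2 * (\<delta>/2) * (1 + tn y))"
        using d tn_nonneg[of y] by (intro pow_le_exp_r) auto
      have "norm (expfam_dens \<nu> t m h y *\<^sub>R f y) = exp (tdot t m y h) / Iz * \<bar>f y\<bar>"
        unfolding dens_eq using Iz_pos by (simp add: abs_mult)
      also have "\<dots> \<le> exp (tdot t m y h) / Iz * (C * (fact k / (\<delta>/2) ^ k * exp (2 * (\<delta>/2) * (1 + tn y))))"
        using Iz_pos C by (intro mult_left_mono order_trans[OF fb] mult_left_mono p) auto
      also have "\<dots> = K * exp (tdot t m y h + \<delta> * tn y)"
        unfolding K_def by (simp add: exp_add[symmetric] algebra_simps)
      finally show "norm (expfam_dens \<nu> t m h y *\<^sub>R f y) \<le> norm (K * exp (tdot t m y h + \<delta> * tn y))"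
        by simp
    qed
  qed
  then show ?thesis
    unfolding expfam_def by (subst integrable_density) (auto simp: expfam_dens_def)
qed

lemma PB_L2: "PB f \<Longrightarrow> L2 (expfam \<nu> t m h) f"
  unfolding L2_def power2_eq_square
  using PB_int[OF PB_mult, of f f] by (auto simp: PB_def intro: meas_expfam)

end

end


lemma C2on_diffable: "C2on U f \<Longrightarrow> v \<in> U \<Longrightarrow> f differentiable (at v)"
  unfolding C2on_def differentiable_def by blast

lemma C2onE':
  assumes "C2on U f"
  obtains Df D2f where "\<And>v. v \<in> U \<Longrightarrow> (f has_derivative Df v) (at v)"
    "\<And>v w. v \<in> U \<Longrightarrow> ((\<lambda>u. Df u w) has_derivative D2f v w) (at v)"
  using assms unfolding C2on_def by blast

lemma L1':
  assumes P: "finite P" "a \<in> P" and f: "\<And>\<theta>. f \<theta> = ft (restr P \<theta>)"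
    and d: "ft differentiable (at (restr P \<theta>))"
  shows "((\<lambda>s. f (\<theta>(a := \<theta> a + s))) has_real_derivative pdt f a \<theta>) (at 0)"
proof -
  obtain D where D: "(ft has_derivative D) (at (restr P \<theta>))" using d unfolding differentiable_def by blast
  show ?thesis using L1[OF P f D] by simp
qed

lemma L2':
  assumes P: "finite P" "a \<in> P" "b \<in> P" and f: "\<And>\<theta>. f \<theta> = ft (restr P \<theta>)"
    and C: "C2on U ft" and U: "restr P \<theta> \<in> U"
  shows "((\<lambda>s. pdt f b (\<theta>(a := \<theta> a + s))) has_real_derivative pdt (pdt f b) a \<theta>) (at 0)"
proof -
  obtain Df D2f where "open U" "\<And>v. v \<in> U \<Longrightarrow> (ft has_derivative Df v) (at v)"
    "\<And>v w. v \<in> U \<Longrightarrow> ((\<lambda>u. Df u w) has_derivative D2f v w) (at v)"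
    using C2onE[OF C] by blast
  from L2[OF P f this(1) U this(2,3)] show ?thesis by simp
qed

lemma pdt_lin:
  fixes hh :: "'k \<Rightarrow> (nat \<times> nat \<times> nat \<Rightarrow> real) \<Rightarrow> real" and hht :: "'k \<Rightarrow> (nat \<times> nat \<times> nat) fs \<Rightarrow> real"
  assumes P: "finite P" "a \<in> P" and A: "finite A"
    and hh: "\<And>\<alpha> \<theta>. \<alpha> \<in> A \<Longrightarrow> hh \<alpha> \<theta> = hht \<alpha> (restr P \<theta>)"
    and G: "\<And>\<theta>. G \<theta> = Gt (restr P \<theta>)"
    and f: "\<And>\<theta>. f \<theta> = (\<Sum>\<alpha>\<in>A. c \<alpha> * hh \<alpha> \<theta>) - G \<theta>"
    and dh: "\<And>\<alpha>. \<alpha> \<in> A \<Longrightarrow> hht \<alpha> differentiable (at (restr P \<theta>))"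
    and dG: "Gt differentiable (at (restr P \<theta>))"
  shows "pdt f a \<theta> = (\<Sum>\<alpha>\<in>A. c \<alpha> * pdt (hh \<alpha>) a \<theta>) - pdt G a \<theta>"
proof -
  have "((\<lambda>s. (\<Sum>\<alpha>\<in>A. c \<alpha> * hh \<alpha> (\<theta>(a := \<theta> a + s))) - G (\<theta>(a := \<theta> a + s))) has_real_derivative
      (\<Sum>\<alpha>\<in>A. c \<alpha> * pdt (hh \<alpha>) a \<theta>) - pdt G a \<theta>) (at 0)"
    by (intro DERIV_diff DERIV_sum DERIV_cmult L1'[OF P G dG] L1'[OF P hh dh]) auto
  then show ?thesis
    unfolding pdt_def[of f] f by (rule DERIV_imp_deriv)
qed

lemma pdt2_lin:
  fixes hh :: "'k \<Rightarrow> (nat \<times> nat \<times> nat \<Rightarrow> real) \<Rightarrow> real" and hht :: "'k \<Rightarrow> (nat \<times> nat \<times> nat) fs \<Rightarrow> real"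
  assumes P: "finite P" "a \<in> P" "b \<in> P" and A: "finite A"
    and hh: "\<And>\<alpha> \<theta>. \<alpha> \<in> A \<Longrightarrow> hh \<alpha> \<theta> = hht \<alpha> (restr P \<theta>)"
    and G: "\<And>\<theta>. G \<theta> = Gt (restr P \<theta>)"
    and f: "\<And>\<theta>. f \<theta> = (\<Sum>\<alpha>\<in>A. c \<alpha> * hh \<alpha> \<theta>) - G \<theta>"
    and Ch: "\<And>\<alpha>. \<alpha> \<in> A \<Longrightarrow> C2on U (hht \<alpha>)"
    and CG: "C2on U Gt" and U: "restr P \<theta> \<in> U"
  shows "pdt (pdt f b) a \<theta> = (\<Sum>\<alpha>\<in>A. c \<alpha> * pdt (pdt (hh \<alpha>) b) a \<theta>) - pdt (pdt G b) a \<theta>"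
proof -
  have oU: "open U" using CG by (simp add: C2on_def)
  have ev: "eventually (\<lambda>s. restr P \<theta> + s *\<^sub>R ee a \<in> U) (nhds 0)"
    by (rule eventually_line_in_open[OF oU U])
  have ev2: "eventually (\<lambda>s. pdt f b (\<theta>(a := \<theta> a + s)) =
      (\<Sum>\<alpha>\<in>A. c \<alpha> * pdt (hh \<alpha>) b (\<theta>(a := \<theta> a + s))) - pdt G b (\<theta>(a := \<theta> a + s))) (nhds 0)"
    using ev
  proof eventually_elim
    case (elim s)
    then have inU: "restr P (\<theta>(a := \<theta> a + s)) \<in> U" by (simp add: restr_upd[OF P(1,2)])
    show ?case
      by (rule pdt_lin[where hh=hh and hht=hht and G=G and Gt=Gt and f=f and c=c and \<theta>="\<theta>(a := \<theta> a + s)", OF P(1,3) A hh G f]) (auto intro: C2on_diffable[OF Ch inU] C2on_diffable[OF CG inU])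
  qed
  have "((\<lambda>s. (\<Sum>\<alpha>\<in>A. c \<alpha> * pdt (hh \<alpha>) b (\<theta>(a := \<theta> a + s))) - pdt G b (\<theta>(a := \<theta> a + s))) has_real_derivative
      (\<Sum>\<alpha>\<in>A. c \<alpha> * pdt (pdt (hh \<alpha>) b) a \<theta>) - pdt (pdt G b) a \<theta>) (at 0)"
    by (intro DERIV_diff DERIV_sum DERIV_cmult L2'[OF P G CG U] L2'[OF P hh Ch U]) auto
  then have "((\<lambda>s. pdt f b (\<theta>(a := \<theta> a + s))) has_real_derivative
      (\<Sum>\<alpha>\<in>A. c \<alpha> * pdt (pdt (hh \<alpha>) b) a \<theta>) - pdt (pdt G b) a \<theta>) (at 0)"
    using DERIV_cong_ev[OF refl ev2 refl] by simp
  then show ?thesis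
    unfolding pdt_def[of "pdt f b"] by (rule DERIV_imp_deriv)
qed

lemma swap3:
  "(\<Sum>\<alpha>\<in>A. \<Sum>\<beta>\<in>B. \<Sum>x\<in>X. f x \<alpha> \<beta>) = (\<Sum>x\<in>X. \<Sum>\<alpha>\<in>A. \<Sum>\<beta>\<in>B. f x \<alpha> \<beta>)"
proof -
  have "(\<Sum>\<alpha>\<in>A. \<Sum>\<beta>\<in>B. \<Sum>x\<in>X. f x \<alpha> \<beta>) = (\<Sum>\<alpha>\<in>A. \<Sum>x\<in>X. \<Sum>\<beta>\<in>B. f x \<alpha> \<beta>)"
    by (rule sum.cong[OF refl]) (rule sum.swap)
  also have "\<dots> = (\<Sum>x\<in>X. \<Sum>\<alpha>\<in>A. \<Sum>\<beta>\<in>B. f x \<alpha> \<beta>)"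
    by (rule sum.swap)
  finally show ?thesis .
qed

lemma (in prob_space) cov_bilin2:
  assumes fin: "finite A" "finite B" "finite C" "finite D"
    and X: "\<And>a b. a \<in> A \<Longrightarrow> b \<in> B \<Longrightarrow> L2 M (X a b)"
    and Y: "\<And>c d. c \<in> C \<Longrightarrow> d \<in> D \<Longrightarrow> L2 M (Y c d)"
  shows "cov M (\<lambda>y. \<Sum>a\<in>A. \<Sum>b\<in>B. p a b * X a b y) (\<lambda>y. \<Sum>c\<in>C. \<Sum>d\<in>D. q c d * Y c d y) =
    (\<Sum>a\<in>A. \<Sum>b\<in>B. \<Sum>c\<in>C. \<Sum>d\<in>D. p a b * q c d * cov M (X a b) (Y c d))"
proof -
  have 1: "(\<lambda>y. \<Sum>a\<in>A. \<Sum>b\<in>B. p a b * X a b y) = (\<lambda>y. \<Sum>z\<in>A \<times> B. p (fst z) (snd z) * X (fst z) (snd z) y)"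
    by (simp add: sum.cartesian_product split_def)
  have 2: "(\<lambda>y. \<Sum>c\<in>C. \<Sum>d\<in>D. q c d * Y c d y) = (\<lambda>y. \<Sum>z\<in>C \<times> D. q (fst z) (snd z) * Y (fst z) (snd z) y)"
    by (simp add: sum.cartesian_product split_def)
  have "cov M (\<lambda>y. \<Sum>z\<in>A \<times> B. p (fst z) (snd z) * X (fst z) (snd z) y) (\<lambda>y. \<Sum>z\<in>C \<times> D. q (fst z) (snd z) * Y (fst z) (snd z) y)
     = (\<Sum>z\<in>A \<times> B. \<Sum>w\<in>C \<times> D. p (fst z) (snd z) * q (fst w) (snd w) * cov M (X (fst z) (snd z)) (Y (fst w) (snd w)))"
    by (rule cov_bilin[where X="\<lambda>z. X (fst z) (snd z)" and Y="\<lambda>w. Y (fst w) (snd w)"]) (use fin X Y in auto)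
  also have "\<dots> = (\<Sum>a\<in>A. \<Sum>b\<in>B. \<Sum>c\<in>C. \<Sum>d\<in>D. p a b * q c d * cov M (X a b) (Y c d))"
    unfolding sum.cartesian_product' by simp
  finally show ?thesis unfolding 1 2 .
qed

lemma cov_neg: "cov M (\<lambda>x. - X x) (\<lambda>x. - Y x) = cov M X Y"
  unfolding cov_def by simp (rule Bochner_Integration.integral_cong, simp_all add: algebra_simps)


lemma swap_lin:
  fixes c :: "'a \<Rightarrow> real" shows "(\<Sum>a\<in>A. c a * (\<Sum>\<alpha>\<in>B. t \<alpha> * d \<alpha> a)) = (\<Sum>\<alpha>\<in>B. t \<alpha> * (\<Sum>a\<in>A. c a * d \<alpha> a))"
proof -
  have "(\<Sum>a\<in>A. \<Sum>\<alpha>\<in>B. c a * (t \<alpha> * d \<alpha> a)) = (\<Sum>\<alpha>\<in>B. \<Sum>a\<in>A. c a * (t \<alpha> * d \<alpha> a))"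
    by (rule sum.swap)
  then show ?thesis unfolding sum_distrib_left by (simp add: ac_simps)
qed

lemma final_alg:
  fixes J H :: "'p \<Rightarrow> 'i \<Rightarrow> real" and HH :: "'p \<Rightarrow> 'i \<Rightarrow> 'i \<Rightarrow> real"
    and dh :: "'m \<Rightarrow> 'p \<Rightarrow> real" and ddh :: "'m \<Rightarrow> 'p \<Rightarrow> 'p \<Rightarrow> real" and F :: "'m \<Rightarrow> 'm \<Rightarrow> real" and P :: "'p set" and M :: "'m set" and c :: real
  defines "E1 \<equiv> \<lambda>\<alpha> i j. \<Sum>a\<in>P. \<Sum>b\<in>P. J a i * J b j * ddh \<alpha> a b"
    and "E2 \<equiv> \<lambda>\<alpha> i j. \<Sum>a\<in>P. HH a i j * dh \<alpha> a"
  shows "c * (\<Sum>\<alpha>\<in>M. \<Sum>\<beta>\<in>M. (- (E2 \<alpha> i j + E1 \<alpha> i j)) * (- (E2 \<beta> k l + E1 \<beta> k l)) * F \<alpha> \<beta>) =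
    (\<Sum>a\<in>P. \<Sum>b\<in>P. \<Sum>c'\<in>P. \<Sum>d\<in>P. J a i * J b j * J c' k * J d l *
        (c * (\<Sum>\<alpha>\<in>M. \<Sum>\<beta>\<in>M. ddh \<alpha> a b * ddh \<beta> c' d * F \<alpha> \<beta>)))
    + c * (\<Sum>\<alpha>\<in>M. \<Sum>\<beta>\<in>M.
           ((\<Sum>a\<in>P. \<Sum>b\<in>P. \<Sum>c'\<in>P. J a i * J b j * HH c' k l * ddh \<alpha> a b * dh \<beta> c')
          + (\<Sum>a\<in>P. \<Sum>b\<in>P. \<Sum>c'\<in>P. HH a i j * J b k * J c' l * dh \<alpha> a * ddh \<beta> b c')
          + (\<Sum>a\<in>P. \<Sum>b\<in>P. HH a i j * HH b k l * dh \<alpha> a * dh \<beta> b)) * F \<alpha> \<beta>)"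
proof -
  have T1: "(\<Sum>a\<in>P. \<Sum>b\<in>P. \<Sum>c'\<in>P. J a i * J b j * HH c' k l * ddh \<alpha> a b * dh \<beta> c') = E1 \<alpha> i j * E2 \<beta> k l" for \<alpha> \<beta>
    unfolding E1_def E2_def unfolding sum_distrib_right unfolding sum_distrib_left by (simp add: ac_simps)
  have T2: "(\<Sum>a\<in>P. \<Sum>b\<in>P. \<Sum>c'\<in>P. HH a i j * J b k * J c' l * dh \<alpha> a * ddh \<beta> b c') = E2 \<alpha> i j * E1 \<beta> k l" for \<alpha> \<beta>
    unfolding E1_def E2_def unfolding sum_distrib_right unfolding sum_distrib_left by (simp add: ac_simps)
  have T3: "(\<Sum>a\<in>P. \<Sum>b\<in>P. HH a i j * HH b k l * dh \<alpha> a * dh \<beta> b) = E2 \<alpha> i j * E2 \<beta> k l" for \<alpha> \<beta>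
    unfolding E2_def unfolding sum_distrib_right unfolding sum_distrib_left by (simp add: ac_simps)
  have T0: "E1 \<alpha> i j * E1 \<beta> k l * F \<alpha> \<beta> =
      (\<Sum>a\<in>P. \<Sum>b\<in>P. \<Sum>c'\<in>P. \<Sum>d\<in>P. J a i * J b j * J c' k * J d l * (ddh \<alpha> a b * ddh \<beta> c' d * F \<alpha> \<beta>))" for \<alpha> \<beta>
  proof -
    have "E1 \<alpha> i j * E1 \<beta> k l = (\<Sum>a\<in>P. \<Sum>b\<in>P. \<Sum>c'\<in>P. \<Sum>d\<in>P. J a i * J b j * J c' k * J d l * (ddh \<alpha> a b * ddh \<beta> c' d))"
      unfolding E1_def unfolding sum_distrib_right unfolding sum_distrib_left by (simp add: ac_simps)
    then show ?thesis unfolding sum_distrib_right by (simp add: sum_distrib_left ac_simps)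
  qed
  have S0: "(\<Sum>\<alpha>\<in>M. \<Sum>\<beta>\<in>M. E1 \<alpha> i j * E1 \<beta> k l * F \<alpha> \<beta>) =
      (\<Sum>a\<in>P. \<Sum>b\<in>P. \<Sum>c'\<in>P. \<Sum>d\<in>P. J a i * J b j * J c' k * J d l * (\<Sum>\<alpha>\<in>M. \<Sum>\<beta>\<in>M. ddh \<alpha> a b * ddh \<beta> c' d * F \<alpha> \<beta>))"
  proof -
    have "(\<Sum>\<alpha>\<in>M. \<Sum>\<beta>\<in>M. E1 \<alpha> i j * E1 \<beta> k l * F \<alpha> \<beta>) =
      (\<Sum>\<alpha>\<in>M. \<Sum>\<beta>\<in>M. \<Sum>a\<in>P. \<Sum>b\<in>P. \<Sum>c'\<in>P. \<Sum>d\<in>P. J a i * J b j * J c' k * J d l * (ddh \<alpha> a b * ddh \<beta> c' d * F \<alpha> \<beta>))"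
      unfolding T0 ..
    also have "\<dots> = (\<Sum>a\<in>P. \<Sum>\<alpha>\<in>M. \<Sum>\<beta>\<in>M. \<Sum>b\<in>P. \<Sum>c'\<in>P. \<Sum>d\<in>P. J a i * J b j * J c' k * J d l * (ddh \<alpha> a b * ddh \<beta> c' d * F \<alpha> \<beta>))"
      by (rule swap3)
    also have "\<dots> = (\<Sum>a\<in>P. \<Sum>b\<in>P. \<Sum>\<alpha>\<in>M. \<Sum>\<beta>\<in>M. \<Sum>c'\<in>P. \<Sum>d\<in>P. J a i * J b j * J c' k * J d l * (ddh \<alpha> a b * ddh \<beta> c' d * F \<alpha> \<beta>))"
      by (rule sum.cong[OF refl], rule swap3)
    also have "\<dots> = (\<Sum>a\<in>P. \<Sum>b\<in>P. \<Sum>c'\<in>P. \<Sum>\<alpha>\<in>M. \<Sum>\<beta>\<in>M. \<Sum>d\<in>P. J a i * J b j * J c' k * J d l * (ddh \<alpha> a b * ddh \<beta> c' d * F \<alpha> \<beta>))"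
      by (rule sum.cong[OF refl], rule sum.cong[OF refl], rule swap3)
    also have "\<dots> = (\<Sum>a\<in>P. \<Sum>b\<in>P. \<Sum>c'\<in>P. \<Sum>d\<in>P. \<Sum>\<alpha>\<in>M. \<Sum>\<beta>\<in>M. J a i * J b j * J c' k * J d l * (ddh \<alpha> a b * ddh \<beta> c' d * F \<alpha> \<beta>))"
      by (rule sum.cong[OF refl], rule sum.cong[OF refl], rule sum.cong[OF refl], rule swap3)
    also have "\<dots> = (\<Sum>a\<in>P. \<Sum>b\<in>P. \<Sum>c'\<in>P. \<Sum>d\<in>P. J a i * J b j * J c' k * J d l * (\<Sum>\<alpha>\<in>M. \<Sum>\<beta>\<in>M. ddh \<alpha> a b * ddh \<beta> c' d * F \<alpha> \<beta>))"
      by (simp add: sum_distrib_left)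
    finally show ?thesis .
  qed
  have A: "c * (\<Sum>\<alpha>\<in>M. \<Sum>\<beta>\<in>M. (- (E2 \<alpha> i j + E1 \<alpha> i j)) * (- (E2 \<beta> k l + E1 \<beta> k l)) * F \<alpha> \<beta>) =
      c * (\<Sum>\<alpha>\<in>M. \<Sum>\<beta>\<in>M. E1 \<alpha> i j * E1 \<beta> k l * F \<alpha> \<beta>) +
      c * (\<Sum>\<alpha>\<in>M. \<Sum>\<beta>\<in>M. (E1 \<alpha> i j * E2 \<beta> k l + E2 \<alpha> i j * E1 \<beta> k l + E2 \<alpha> i j * E2 \<beta> k l) * F \<alpha> \<beta>)"
    by (simp add: sum.distrib algebra_simps)
  have B: "c * (\<Sum>\<alpha>\<in>M. \<Sum>\<beta>\<in>M. E1 \<alpha> i j * E1 \<beta> k l * F \<alpha> \<beta>) =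
    (\<Sum>a\<in>P. \<Sum>b\<in>P. \<Sum>c'\<in>P. \<Sum>d\<in>P. J a i * J b j * J c' k * J d l *
        (c * (\<Sum>\<alpha>\<in>M. \<Sum>\<beta>\<in>M. ddh \<alpha> a b * ddh \<beta> c' d * F \<alpha> \<beta>)))"
    unfolding S0 by (simp add: sum_distrib_left ac_simps)
  show ?thesis unfolding T1 T2 T3 A B ..
qed

theorem mainTheorem16:
  fixes \<sigma> :: "real \<Rightarrow> real" and L :: nat and n :: "nat \<Rightarrow> nat" and x :: "nat \<Rightarrow> real"
    and \<nu> :: "'y measure" and t :: "'y \<Rightarrow> nat \<Rightarrow> real" and N :: nat
    and \<Theta> :: "real^'m \<Rightarrow> (nat \<times> nat \<times> nat \<Rightarrow> real)" and \<xi>0 :: "real^'m"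
    and i j k l :: 'm
  defines "P \<equiv> param_idx L n"
    and "\<theta>0 \<equiv> \<Theta> \<xi>0"
    and "h \<equiv> hL \<sigma> L n x"
    and "S \<equiv> sample_space \<sigma> L n x \<nu> t N (\<Theta> \<xi>0)"
    and "J \<equiv> (\<lambda>a i. pdx (\<lambda>\<xi>. \<Theta> \<xi> a) i \<xi>0)"
    and "H \<equiv> (\<lambda>a i j. pdx (pdx (\<lambda>\<xi>. \<Theta> \<xi> a) j) i \<xi>0)"
    and "dh \<equiv> (\<lambda>\<alpha> a. pdt (\<lambda>\<theta>. hL \<sigma> L n x \<theta> \<alpha>) a (\<Theta> \<xi>0))"
    and "ddh \<equiv> (\<lambda>\<alpha> a b. pdt (pdt (\<lambda>\<theta>. hL \<sigma> L n x \<theta> \<alpha>) b) a (\<Theta> \<xi>0))"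
  assumes L_pos: "1 \<le> L"
    and widths_pos: "\<forall>q\<le>L. 1 \<le> n q"
    and N_pos: "0 < N"
    and sigma_C2: "C2_real \<sigma>"
    and reparam: "\<forall>a\<in>P. twice_differentiable (\<lambda>\<xi>. \<Theta> \<xi> a)"
    and t_meas: "\<forall>\<alpha><n L. (\<lambda>y. t y \<alpha>) \<in> borel_measurable \<nu>"
    and interior: "in_nat_interior \<nu> t (n L) (h \<theta>0)"
  shows
    "cov S (I1_xi \<sigma> L n x \<nu> t N \<Theta> \<xi>0 i j) (I1_xi \<sigma> L n x \<nu> t N \<Theta> \<xi>0 k l) =
       (\<Sum>a\<in>P. \<Sum>b\<in>P. \<Sum>c\<in>P. \<Sum>d\<in>P. J a i * J b j * J c k * J d l *
          cov S (I1_theta \<sigma> L n x \<nu> t N \<theta>0 a b) (I1_theta \<sigma> L n x \<nu> t N \<theta>0 c d))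
     \<and> cov S (I2_xi \<sigma> L n x \<nu> t N \<Theta> \<xi>0 i j) (I2_xi \<sigma> L n x \<nu> t N \<Theta> \<xi>0 k l) =
       (\<Sum>a\<in>P. \<Sum>b\<in>P. \<Sum>c\<in>P. \<Sum>d\<in>P. J a i * J b j * J c k * J d l *
          cov S (I2_theta \<sigma> L n x \<nu> t N \<theta>0 a b) (I2_theta \<sigma> L n x \<nu> t N \<theta>0 c d))
       + (1 / real N) * (\<Sum>\<alpha><n L. \<Sum>\<beta><n L.
           ((\<Sum>a\<in>P. \<Sum>b\<in>P. \<Sum>c\<in>P. J a i * J b j * H c k l * ddh \<alpha> a b * dh \<beta> c)
          + (\<Sum>a\<in>P. \<Sum>b\<in>P. \<Sum>c\<in>P. H a i j * J b k * J c l * dh \<alpha> a * ddh \<beta> b c)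
          + (\<Sum>a\<in>P. \<Sum>b\<in>P. H a i j * H b k l * dh \<alpha> a * dh \<beta> b))
           * fisher_h \<nu> t (n L) (h \<theta>0) \<alpha> \<beta>)"
proof -
  let ?m = "n L"
  have finP: "finite P" unfolding P_def by (rule finite_param_idx)
  define Gr where "Gr a = (SOME G. (\<forall>\<xi>. ((\<lambda>\<xi>. \<Theta> \<xi> a) has_derivative (\<lambda>v. G \<xi> \<bullet> v)) (at \<xi>)) \<and> (\<forall>\<xi>. G differentiable (at \<xi>)))" for a
  have Gr: "(\<forall>\<xi>. ((\<lambda>\<xi>. \<Theta> \<xi> a) has_derivative (\<lambda>v. Gr a \<xi> \<bullet> v)) (at \<xi>)) \<and> (\<forall>\<xi>. Gr a differentiable (at \<xi>))"
    if "a \<in> P" for a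
  proof -
    have "\<exists>G. (\<forall>\<xi>. ((\<lambda>\<xi>. \<Theta> \<xi> a) has_derivative (\<lambda>v. G \<xi> \<bullet> v)) (at \<xi>)) \<and> (\<forall>\<xi>. G differentiable (at \<xi>))"
      using reparam that by (simp add: twice_differentiable_def)
    from someI_ex[OF this] show ?thesis unfolding Gr_def .
  qed
  interpret R: reparam P \<Theta> Gr
    by unfold_locales (use finP Gr in auto)
  interpret ef \<nu> t ?m
    by unfold_locales (use t_meas in auto)
  define ht where "ht \<alpha> v = hL \<sigma> L n x (fsr v) \<alpha>" for \<alpha> v
  have ht_C2: "C2on UNIV (ht \<alpha>)" for \<alpha>
    unfolding ht_def[abs_def] hL_def by (rule layer_C2[OF sigma_C2])
  have hh: "hL \<sigma> L n x \<theta> \<alpha> = ht \<alpha> (restr P \<theta>)" if "\<alpha> < ?m" for \<alpha> \<theta>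
    using hL_restr[where n=n and L=L and \<sigma>=\<sigma> and x=x and \<theta>=\<theta>, OF that] by (simp add: ht_def P_def)
  define Hv where "Hv v = restr {..<?m} (\<lambda>\<alpha>. ht \<alpha> v)" for v
  define Gt where "Gt v = logpart \<nu> t ?m (fsr (Hv v))" for v
  define U where "U = Hv -` V"
  have CG: "C2on U Gt"
    unfolding U_def Gt_def[abs_def] Hv_def[abs_def]
    by (rule C2on_vec_comp[OF logpart_C2 finite_lessThan ht_C2])
  have oU: "open U" using CG by (simp add: C2on_def)
  have fsrHv: "fsr (Hv v) \<alpha> = ht \<alpha> v" if "\<alpha> < ?m" for v \<alpha> using that by (simp add: Hv_def)
  define GG where "GG \<theta> = logpart \<nu> t ?m (hL \<sigma> L n x \<theta>)" for \<theta>
  have Grep: "GG \<theta> = Gt (restr P \<theta>)" for \<theta>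
    unfolding Gt_def GG_def by (rule logpart_cong) (simp add: fsrHv hh)
  define ll where "ll y \<theta> = loglik \<sigma> L n x \<nu> t \<theta> y" for y \<theta>
  define hh' where "hh' \<alpha> \<theta> = hL \<sigma> L n x \<theta> \<alpha>" for \<alpha> \<theta>
  have ll_eq: "ll y \<theta> = (\<Sum>\<alpha><?m. t y \<alpha> * hh' \<alpha> \<theta>) - GG \<theta>" for y \<theta>
    unfolding ll_def loglik_def expfam_dens_def tdot_def GG_def hh'_def by simp
  define lt where "lt y v = (\<Sum>\<alpha><?m. t y \<alpha> * ht \<alpha> v) - Gt v" for y v
  have ll_rep: "ll y \<theta> = lt y (restr P \<theta>)" for y \<theta>
    unfolding ll_eq lt_def Grep hh'_def by (simp add: hh)
  have hh'_rep: "hh' \<alpha> \<theta> = ht \<alpha> (restr P \<theta>)" if "\<alpha> \<in> {..<?m}" for \<alpha> \<theta>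
    using hh that by (simp add: hh'_def)
  have Cht: "C2on U (ht \<alpha>)" for \<alpha> by (rule C2on_subset[OF ht_C2 oU]) simp
  have Clt: "C2on U (lt y)" for y
    unfolding lt_def[abs_def] by (intro C2on_diff C2on_sum C2on_cmult Cht CG oU)
  have v0U: "restr P \<theta>0 \<in> U"
  proof -
    have "in_nat_interior \<nu> t ?m (fsr (Hv (restr P \<theta>0)))"
      using interior unfolding h_def by (subst interior_cong) (auto simp: fsrHv hh)
    then show ?thesis unfolding U_def V_def by simp
  qed
  have Tt0: "R.Tt \<xi>0 = restr P \<theta>0" by (simp add: R.Tt_def \<theta>0_def)
  have J_eq: "J a i = Gr a \<xi>0 $ i" if "a \<in> P" for a i
    unfolding J_def using R.pdx_Theta[OF that] .
  have d1: "pdx (\<lambda>\<xi>. ll y (\<Theta> \<xi>)) j \<xi>0 = (\<Sum>a\<in>P. J a j * pdt (ll y) a \<theta>0)" for y j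
  proof -
    obtain Df D2f where f1: "\<And>v. v \<in> U \<Longrightarrow> (lt y has_derivative Df v) (at v)"
      and f2: "\<And>v w. v \<in> U \<Longrightarrow> ((\<lambda>u. Df u w) has_derivative D2f v w) (at v)"
      using C2onE'[OF Clt[of y]] by blast
    have D0: "(lt y has_derivative Df (R.Tt \<xi>0)) (at (R.Tt \<xi>0))"
      unfolding Tt0 by (rule f1[OF v0U])
    have "pdx (\<lambda>\<xi>. ll y (\<Theta> \<xi>)) j \<xi>0 = (\<Sum>a\<in>P. (Gr a \<xi>0 $ j) * Df (R.Tt \<xi>0) (ee a))"
      by (rule R.L3(2)[of "ll y" "lt y", OF ll_rep[of y] D0])
    also have "\<dots> = (\<Sum>a\<in>P. J a j * pdt (ll y) a \<theta>0)"
    proof (intro sum.cong refl)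
      fix a assume a: "a \<in> P"
      have "pdt (ll y) a \<theta>0 = Df (restr P \<theta>0) (ee a)"
        by (rule L1(2)[of P a "ll y" "lt y", OF finP a ll_rep[of y] f1[OF v0U]])
      then show "Gr a \<xi>0 $ j * Df (R.Tt \<xi>0) (ee a) = J a j * pdt (ll y) a \<theta>0"
        by (simp add: J_eq[OF a] Tt0)
    qed
    finally show ?thesis .
  qed
  have d2: "pdx (pdx (\<lambda>\<xi>. ll y (\<Theta> \<xi>)) j) i \<xi>0 =
      (\<Sum>a\<in>P. H a i j * pdt (ll y) a \<theta>0 + J a j * (\<Sum>b\<in>P. J b i * pdt (pdt (ll y) a) b \<theta>0))" for y i j
  proof -
    obtain Df D2f where f1: "\<And>v. v \<in> U \<Longrightarrow> (lt y has_derivative Df v) (at v)"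
      and f2: "\<And>v w. v \<in> U \<Longrightarrow> ((\<lambda>u. Df u w) has_derivative D2f v w) (at v)"
      using C2onE'[OF Clt[of y]] by blast
    have "pdx (pdx (\<lambda>\<xi>. ll y (\<Theta> \<xi>)) j) i \<xi>0 =
     (\<Sum>a\<in>P. pdx (pdx (\<lambda>\<xi>. \<Theta> \<xi> a) j) i \<xi>0 * Df (R.Tt \<xi>0) (ee a)
        + (Gr a \<xi>0 $ j) * (\<Sum>b\<in>P. (Gr b \<xi>0 $ i) * D2f (R.Tt \<xi>0) (ee a) (ee b)))"
      by (rule R.L4[of "ll y" "lt y", OF ll_rep[of y] oU _ f1 f2]) (simp add: Tt0 v0U)
    also have "\<dots> = (\<Sum>a\<in>P. H a i j * pdt (ll y) a \<theta>0 + J a j * (\<Sum>b\<in>P. J b i * pdt (pdt (ll y) a) b \<theta>0))"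
    proof (rule sum.cong[OF refl])
      fix a assume a: "a \<in> P"
      have 1: "pdx (pdx (\<lambda>\<xi>. \<Theta> \<xi> a) j) i \<xi>0 = H a i j" by (simp add: H_def)
      have 2: "Df (R.Tt \<xi>0) (ee a) = pdt (ll y) a \<theta>0"
        using L1(2)[of P a "ll y" "lt y", OF finP a ll_rep[of y] f1[OF v0U]] by (simp add: Tt0)
      have 3: "Gr a \<xi>0 $ j = J a j" using J_eq[OF a] by simp
      have 4: "(\<Sum>b\<in>P. Gr b \<xi>0 $ i * D2f (R.Tt \<xi>0) (ee a) (ee b)) = (\<Sum>b\<in>P. J b i * pdt (pdt (ll y) a) b \<theta>0)"
      proof (rule sum.cong[OF refl])
        fix b assume b: "b \<in> P"
        have "pdt (pdt (ll y) a) b \<theta>0 = D2f (restr P \<theta>0) (ee a) (ee b)"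
          by (rule L2(2)[of P b a "ll y" "lt y", OF finP b a ll_rep[of y] oU v0U f1 f2])
        then show "Gr b \<xi>0 $ i * D2f (R.Tt \<xi>0) (ee a) (ee b) = J b i * pdt (pdt (ll y) a) b \<theta>0"
          by (simp add: J_eq[OF b] Tt0)
      qed
      show "pdx (pdx (\<lambda>\<xi>. \<Theta> \<xi> a) j) i \<xi>0 * Df (R.Tt \<xi>0) (ee a)
        + (Gr a \<xi>0 $ j) * (\<Sum>b\<in>P. (Gr b \<xi>0 $ i) * D2f (R.Tt \<xi>0) (ee a) (ee b)) =
        H a i j * pdt (ll y) a \<theta>0 + J a j * (\<Sum>b\<in>P. J b i * pdt (pdt (ll y) a) b \<theta>0)"
        unfolding 1 2 3 4 ..
    qed
    finally show ?thesis .
  qed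
  have g1: "pdt (ll y) a \<theta>0 = (\<Sum>\<alpha><?m. t y \<alpha> * dh \<alpha> a) - pdt GG a \<theta>0" if a: "a \<in> P" for y a
  proof -
    have "pdt (ll y) a \<theta>0 = (\<Sum>\<alpha><?m. t y \<alpha> * pdt (hh' \<alpha>) a \<theta>0) - pdt GG a \<theta>0"
      by (rule pdt_lin[where hh=hh' and hht=ht and G=GG and Gt=Gt and f="ll y" and c="t y", OF finP a finite_lessThan hh'_rep Grep ll_eq])
        (use C2on_diffable[OF Cht v0U] C2on_diffable[OF CG v0U] in auto)
    then show ?thesis by (simp add: dh_def hh'_def[abs_def] \<theta>0_def)
  qed
  have g2: "pdt (pdt (ll y) b) a \<theta>0 = (\<Sum>\<alpha><?m. t y \<alpha> * ddh \<alpha> a b) - pdt (pdt GG b) a \<theta>0"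
    if a: "a \<in> P" and b: "b \<in> P" for y a b
  proof -
    have "pdt (pdt (ll y) b) a \<theta>0 = (\<Sum>\<alpha><?m. t y \<alpha> * pdt (pdt (hh' \<alpha>) b) a \<theta>0) - pdt (pdt GG b) a \<theta>0"
      by (rule pdt2_lin[where hh=hh' and hht=ht and G=GG and Gt=Gt and f="ll y" and c="t y", OF finP a b finite_lessThan hh'_rep Grep ll_eq Cht CG v0U])
    then show ?thesis by (simp add: ddh_def hh'_def[abs_def] \<theta>0_def)
  qed
  have hint: "in_nat_interior \<nu> t ?m (hL \<sigma> L n x \<theta>0)" using interior by (simp add: h_def)
  define \<mu> where "\<mu> = expfam \<nu> t ?m (hL \<sigma> L n x \<theta>0)"
  have \<mu>p: "prob_space \<mu>" unfolding \<mu>_def by (rule expfam_prob[OF hint])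
  interpret I: iid \<mu> N by (intro iid.intro \<mu>p iid_axioms.intro N_pos)
  have S_eq: "S = I.S" unfolding S_def sample_space_def I.S_def by (simp add: \<mu>_def \<theta>0_def)
  have L2\<mu>: "L2 \<mu> f" if "PB f" for f unfolding \<mu>_def by (rule PB_L2[OF hint that])
  have llabs: "(\<lambda>\<theta>. loglik \<sigma> L n x \<nu> t \<theta> y) = ll y" for y by (simp add: ll_def fun_eq_iff)
  have llabs2: "(\<lambda>\<xi>. loglik \<sigma> L n x \<nu> t (\<Theta> \<xi>) y) = (\<lambda>\<xi>. ll y (\<Theta> \<xi>))" for y by (simp add: ll_def)
  define ga where "ga a y = (\<Sum>\<alpha><?m. t y \<alpha> * dh \<alpha> a) - pdt GG a \<theta>0" for a y
  have PBga: "PB (ga a)" for a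
    unfolding ga_def by (intro PB_diff PB_sum PB_mult PB_t PB_const) auto
  have ga_eq: "pdt (ll y) a \<theta>0 = ga a y" if "a \<in> P" for y a using g1[OF that] by (simp add: ga_def)
  define Xg where "Xg a b y = ga a y * ga b y" for a b y
  have PBXg: "PB (Xg a b)" for a b unfolding Xg_def[abs_def] by (intro PB_mult PBga)
  have I1t: "I1_theta \<sigma> L n x \<nu> t N \<theta>0 a b = (\<lambda>ys. 1 / real N * (\<Sum>s<N. Xg a b (ys s)))"
    if "a \<in> P" "b \<in> P" for a b
    unfolding I1_theta_def[abs_def] llabs using that by (simp add: ga_eq Xg_def)
  have I1x: "I1_xi \<sigma> L n x \<nu> t N \<Theta> \<xi>0 i j =
      (\<lambda>ys. 1 / real N * (\<Sum>s<N. (\<Sum>a\<in>P. \<Sum>b\<in>P. (J a i * J b j) * Xg a b (ys s))))" for i j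
  proof -
    have "pdx (\<lambda>\<xi>. ll y (\<Theta> \<xi>)) i \<xi>0 * pdx (\<lambda>\<xi>. ll y (\<Theta> \<xi>)) j \<xi>0 = (\<Sum>a\<in>P. \<Sum>b\<in>P. (J a i * J b j) * Xg a b y)" for y
    proof -
      have "pdx (\<lambda>\<xi>. ll y (\<Theta> \<xi>)) i \<xi>0 * pdx (\<lambda>\<xi>. ll y (\<Theta> \<xi>)) j \<xi>0 =
          (\<Sum>a\<in>P. J a i * ga a y) * (\<Sum>b\<in>P. J b j * ga b y)"
        unfolding d1 by (simp add: ga_eq)
      also have "\<dots> = (\<Sum>a\<in>P. \<Sum>b\<in>P. (J a i * J b j) * Xg a b y)"
        unfolding sum_product Xg_def by (simp add: ac_simps)
      finally show ?thesis .
    qed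
    then show ?thesis unfolding I1_xi_def[abs_def] llabs2 by simp
  qed
  have part1: "cov S (I1_xi \<sigma> L n x \<nu> t N \<Theta> \<xi>0 i j) (I1_xi \<sigma> L n x \<nu> t N \<Theta> \<xi>0 k l) =
       (\<Sum>a\<in>P. \<Sum>b\<in>P. \<Sum>c\<in>P. \<Sum>d\<in>P. J a i * J b j * J c k * J d l *
          cov S (I1_theta \<sigma> L n x \<nu> t N \<theta>0 a b) (I1_theta \<sigma> L n x \<nu> t N \<theta>0 c d))"
  proof -
    have PBv: "PB (\<lambda>y. \<Sum>a\<in>P. \<Sum>b\<in>P. (J a i' * J b j') * Xg a b y)" for i' j'
      by (intro PB_sum PB_mult PB_const PBXg)
    have "cov S (I1_xi \<sigma> L n x \<nu> t N \<Theta> \<xi>0 i j) (I1_xi \<sigma> L n x \<nu> t N \<Theta> \<xi>0 k l) =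
        1 / real N * cov \<mu> (\<lambda>y. \<Sum>a\<in>P. \<Sum>b\<in>P. (J a i * J b j) * Xg a b y) (\<lambda>y. \<Sum>c\<in>P. \<Sum>d\<in>P. (J c k * J d l) * Xg c d y)"
      unfolding I1x S_eq by (rule I.Lcov[OF L2\<mu>[OF PBv] L2\<mu>[OF PBv]])
    also have "\<dots> = 1 / real N * (\<Sum>a\<in>P. \<Sum>b\<in>P. \<Sum>c\<in>P. \<Sum>d\<in>P. (J a i * J b j) * (J c k * J d l) * cov \<mu> (Xg a b) (Xg c d))"
      by (subst I.cov_bilin2) (auto intro: L2\<mu> PBXg finP)
    also have "\<dots> = (\<Sum>a\<in>P. \<Sum>b\<in>P. \<Sum>c\<in>P. \<Sum>d\<in>P. J a i * J b j * J c k * J d l *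
          cov S (I1_theta \<sigma> L n x \<nu> t N \<theta>0 a b) (I1_theta \<sigma> L n x \<nu> t N \<theta>0 c d))"
    proof -
      have "cov S (I1_theta \<sigma> L n x \<nu> t N \<theta>0 a b) (I1_theta \<sigma> L n x \<nu> t N \<theta>0 c d) = 1 / real N * cov \<mu> (Xg a b) (Xg c d)"
        if "a \<in> P" "b \<in> P" "c \<in> P" "d \<in> P" for a b c d
        unfolding I1t[OF that(1,2)] I1t[OF that(3,4)] S_eq by (rule I.Lcov[OF L2\<mu>[OF PBXg] L2\<mu>[OF PBXg]])
      then show ?thesis by (simp add: sum_distrib_left ac_simps)
    qed
    finally show ?thesis .
  qed
  define g2f where "g2f a b y = (\<Sum>\<alpha><?m. t y \<alpha> * ddh \<alpha> a b) - pdt (pdt GG b) a \<theta>0" for a b y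
  have g2_eq: "pdt (pdt (ll y) b) a \<theta>0 = g2f a b y" if "a \<in> P" "b \<in> P" for y a b
    using g2[OF that] by (simp add: g2f_def)
  define E1 where "E1 \<alpha> i j = (\<Sum>a\<in>P. \<Sum>b\<in>P. J a i * J b j * ddh \<alpha> a b)" for \<alpha> i j
  define E2 where "E2 \<alpha> i j = (\<Sum>a\<in>P. H a i j * dh \<alpha> a)" for \<alpha> i j
  define Cf where "Cf i j = (\<Sum>a\<in>P. H a i j * pdt GG a \<theta>0 + J a j * (\<Sum>b\<in>P. J b i * pdt (pdt GG a) b \<theta>0))" for i j
  define uf where "uf i j y = (\<Sum>\<alpha><?m. (- (E2 \<alpha> i j + E1 \<alpha> i j)) * t y \<alpha>) + Cf i j" for i j y
  have u_eq: "- pdx (pdx (\<lambda>\<xi>. ll y (\<Theta> \<xi>)) j) i \<xi>0 = uf i j y" for y i j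
  proof -
    have "pdx (pdx (\<lambda>\<xi>. ll y (\<Theta> \<xi>)) j) i \<xi>0 = (\<Sum>a\<in>P. H a i j * ga a y + J a j * (\<Sum>b\<in>P. J b i * g2f b a y))"
      unfolding d2
    proof (rule sum.cong[OF refl])
      fix a assume a: "a \<in> P"
      have "(\<Sum>b\<in>P. J b i * pdt (pdt (ll y) a) b \<theta>0) = (\<Sum>b\<in>P. J b i * g2f b a y)"
        by (rule sum.cong[OF refl]) (simp add: g2_eq a)
      then show "H a i j * pdt (ll y) a \<theta>0 + J a j * (\<Sum>b\<in>P. J b i * pdt (pdt (ll y) a) b \<theta>0) =
          H a i j * ga a y + J a j * (\<Sum>b\<in>P. J b i * g2f b a y)"
        by (simp add: ga_eq a)
    qed
    also have "\<dots> = (\<Sum>a\<in>P. (H a i j * (\<Sum>\<alpha><?m. t y \<alpha> * dh \<alpha> a) + J a j * (\<Sum>b\<in>P. J b i * (\<Sum>\<alpha><?m. t y \<alpha> * ddh \<alpha> b a)))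
        - (H a i j * pdt GG a \<theta>0 + J a j * (\<Sum>b\<in>P. J b i * pdt (pdt GG a) b \<theta>0)))"
    proof (rule sum.cong[OF refl])
      fix a
      have eqb: "(\<Sum>b\<in>P. J b i * g2f b a y) = (\<Sum>b\<in>P. J b i * (\<Sum>\<alpha><?m. t y \<alpha> * ddh \<alpha> b a)) - (\<Sum>b\<in>P. J b i * pdt (pdt GG a) b \<theta>0)"
        unfolding g2f_def by (simp add: right_diff_distrib sum_subtractf)
      show "H a i j * ga a y + J a j * (\<Sum>b\<in>P. J b i * g2f b a y) =
        H a i j * (\<Sum>\<alpha><?m. t y \<alpha> * dh \<alpha> a) + J a j * (\<Sum>b\<in>P. J b i * (\<Sum>\<alpha><?m. t y \<alpha> * ddh \<alpha> b a)) -
        (H a i j * pdt GG a \<theta>0 + J a j * (\<Sum>b\<in>P. J b i * pdt (pdt GG a) b \<theta>0))"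
        unfolding ga_def eqb by (simp add: algebra_simps)
    qed
    also have "\<dots> = (\<Sum>a\<in>P. H a i j * (\<Sum>\<alpha><?m. t y \<alpha> * dh \<alpha> a)) + (\<Sum>a\<in>P. J a j * (\<Sum>b\<in>P. J b i * (\<Sum>\<alpha><?m. t y \<alpha> * ddh \<alpha> b a)))
        - Cf i j"
      unfolding Cf_def by (simp only: sum_subtractf sum.distrib)
    also have "(\<Sum>a\<in>P. H a i j * (\<Sum>\<alpha><?m. t y \<alpha> * dh \<alpha> a)) = (\<Sum>\<alpha><?m. t y \<alpha> * E2 \<alpha> i j)"
      unfolding E2_def by (rule swap_lin)
    also have "(\<Sum>a\<in>P. J a j * (\<Sum>b\<in>P. J b i * (\<Sum>\<alpha><?m. t y \<alpha> * ddh \<alpha> b a))) = (\<Sum>\<alpha><?m. t y \<alpha> * E1 \<alpha> i j)"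
    proof -
      have "(\<Sum>a\<in>P. J a j * (\<Sum>b\<in>P. J b i * (\<Sum>\<alpha><?m. t y \<alpha> * ddh \<alpha> b a))) =
          (\<Sum>a\<in>P. J a j * (\<Sum>\<alpha><?m. t y \<alpha> * (\<Sum>b\<in>P. J b i * ddh \<alpha> b a)))"
      proof (rule sum.cong[OF refl])
        fix a
        show "J a j * (\<Sum>b\<in>P. J b i * (\<Sum>\<alpha><?m. t y \<alpha> * ddh \<alpha> b a)) =
            J a j * (\<Sum>\<alpha><?m. t y \<alpha> * (\<Sum>b\<in>P. J b i * ddh \<alpha> b a))"
          using swap_lin[where c="\<lambda>b. J b i" and A=P and B="{..<?m}" and t="t y" and d="\<lambda>\<alpha> b. ddh \<alpha> b a"]
          by simp
      qed
      also have "\<dots> = (\<Sum>\<alpha><?m. t y \<alpha> * (\<Sum>a\<in>P. J a j * (\<Sum>b\<in>P. J b i * ddh \<alpha> b a)))"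
        by (rule swap_lin)
      also have "\<dots> = (\<Sum>\<alpha><?m. t y \<alpha> * E1 \<alpha> i j)"
      proof (rule sum.cong[OF refl])
        fix \<alpha>
        have "(\<Sum>a\<in>P. J a j * (\<Sum>b\<in>P. J b i * ddh \<alpha> b a)) = (\<Sum>a\<in>P. \<Sum>b\<in>P. J b i * J a j * ddh \<alpha> b a)"
          unfolding sum_distrib_left by (simp add: ac_simps)
        also have "\<dots> = (\<Sum>b\<in>P. \<Sum>a\<in>P. J b i * J a j * ddh \<alpha> b a)" by (rule sum.swap)
        also have "\<dots> = E1 \<alpha> i j" by (simp add: E1_def)
        finally show "t y \<alpha> * (\<Sum>a\<in>P. J a j * (\<Sum>b\<in>P. J b i * ddh \<alpha> b a)) = t y \<alpha> * E1 \<alpha> i j" by simp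
      qed
      finally show ?thesis .
    qed
    finally have pe: "pdx (pdx (\<lambda>\<xi>. ll y (\<Theta> \<xi>)) j) i \<xi>0 = (\<Sum>\<alpha><?m. t y \<alpha> * E2 \<alpha> i j) + (\<Sum>\<alpha><?m. t y \<alpha> * E1 \<alpha> i j) - Cf i j" .
    show ?thesis
    proof -
      have "(\<Sum>\<alpha><?m. (- (E2 \<alpha> i j + E1 \<alpha> i j)) * t y \<alpha>) = - ((\<Sum>\<alpha><?m. t y \<alpha> * E2 \<alpha> i j) + (\<Sum>\<alpha><?m. t y \<alpha> * E1 \<alpha> i j))"
        unfolding sum_negf[symmetric] sum.distrib[symmetric] by (rule sum.cong) (auto simp: algebra_simps)
      then show "- pdx (pdx (\<lambda>\<xi>. ll y (\<Theta> \<xi>)) j) i \<xi>0 = uf i j y" using pe unfolding uf_def by simp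
    qed
  qed
  define wf where "wf a b y = (\<Sum>\<alpha><?m. (- ddh \<alpha> a b) * t y \<alpha>) + pdt (pdt GG b) a \<theta>0" for a b y
  have I2x: "I2_xi \<sigma> L n x \<nu> t N \<Theta> \<xi>0 i' j' = (\<lambda>ys. 1 / real N * (\<Sum>s<N. uf i' j' (ys s)))" for i' j'
    unfolding I2_xi_def[abs_def] llabs2 u_eq by simp
  have w_eq: "- g2f a b y = wf a b y" for a b y
    unfolding g2f_def wf_def by (simp add: sum_negf algebra_simps)
  have I2t: "I2_theta \<sigma> L n x \<nu> t N \<theta>0 a b = (\<lambda>ys. 1 / real N * (\<Sum>s<N. wf a b (ys s)))"
    if "a \<in> P" "b \<in> P" for a b
    unfolding I2_theta_def[abs_def] llabs using that by (simp add: g2_eq w_eq)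
  have L2t: "L2 \<mu> (\<lambda>y. t y \<alpha>)" if "\<alpha> < ?m" for \<alpha> using L2\<mu>[OF PB_t[OF that]] .
  have covlin: "cov \<mu> (\<lambda>y. (\<Sum>\<alpha><?m. p \<alpha> * t y \<alpha>) + c1) (\<lambda>y. (\<Sum>\<beta><?m. q \<beta> * t y \<beta>) + c2) =
      (\<Sum>\<alpha><?m. \<Sum>\<beta><?m. p \<alpha> * q \<beta> * fisher_h \<nu> t (n L) (h \<theta>0) \<alpha> \<beta>)" for p q c1 c2
  proof -
    have "cov \<mu> (\<lambda>y. (\<Sum>\<alpha><?m. p \<alpha> * t y \<alpha>) + c1) (\<lambda>y. (\<Sum>\<beta><?m. q \<beta> * t y \<beta>) + c2) =
        cov \<mu> (\<lambda>y. \<Sum>\<alpha><?m. p \<alpha> * t y \<alpha>) (\<lambda>y. \<Sum>\<beta><?m. q \<beta> * t y \<beta>)"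
      by (rule I.cov_add_const) (intro I.L2_int L2_sum L2_cmult L2t; simp)+
    also have "\<dots> = (\<Sum>\<alpha><?m. \<Sum>\<beta><?m. p \<alpha> * q \<beta> * cov \<mu> (\<lambda>y. t y \<alpha>) (\<lambda>y. t y \<beta>))"
      by (rule I.cov_bilin) (auto intro: L2t)
    also have "\<dots> = (\<Sum>\<alpha><?m. \<Sum>\<beta><?m. p \<alpha> * q \<beta> * fisher_h \<nu> t (n L) (h \<theta>0) \<alpha> \<beta>)"
      by (simp add: fisher_h_def \<mu>_def h_def)
    finally show ?thesis .
  qed
  have ufabs: "uf i' j' = (\<lambda>y. (\<Sum>\<alpha><?m. (- (E2 \<alpha> i' j' + E1 \<alpha> i' j')) * t y \<alpha>) + Cf i' j')" for i' j'
    by (simp add: uf_def fun_eq_iff)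
  have wfabs: "wf a b = (\<lambda>y. (\<Sum>\<alpha><?m. (- ddh \<alpha> a b) * t y \<alpha>) + pdt (pdt GG b) a \<theta>0)" for a b
    by (simp add: wf_def fun_eq_iff)
  have PBuf: "PB (uf i' j')" for i' j'
    unfolding ufabs by (intro PB_add PB_sum PB_mult PB_const PB_t) auto
  have PBwf: "PB (wf a b)" for a b
    unfolding wfabs by (intro PB_add PB_sum PB_mult PB_const PB_t) auto
  have c1: "cov S (I2_xi \<sigma> L n x \<nu> t N \<Theta> \<xi>0 i j) (I2_xi \<sigma> L n x \<nu> t N \<Theta> \<xi>0 k l) =
      1 / real N * (\<Sum>\<alpha><?m. \<Sum>\<beta><?m. (- (E2 \<alpha> i j + E1 \<alpha> i j)) * (- (E2 \<beta> k l + E1 \<beta> k l)) * fisher_h \<nu> t (n L) (h \<theta>0) \<alpha> \<beta>)"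
  proof -
    have "cov S (I2_xi \<sigma> L n x \<nu> t N \<Theta> \<xi>0 i j) (I2_xi \<sigma> L n x \<nu> t N \<Theta> \<xi>0 k l) = 1 / real N * cov \<mu> (uf i j) (uf k l)"
      unfolding I2x S_eq by (rule I.Lcov[OF L2\<mu>[OF PBuf] L2\<mu>[OF PBuf]])
    also have "cov \<mu> (uf i j) (uf k l) = (\<Sum>\<alpha><?m. \<Sum>\<beta><?m. (- (E2 \<alpha> i j + E1 \<alpha> i j)) * (- (E2 \<beta> k l + E1 \<beta> k l)) * fisher_h \<nu> t (n L) (h \<theta>0) \<alpha> \<beta>)"
      unfolding ufabs by (rule covlin)
    finally show ?thesis .
  qed
  have c2: "cov S (I2_theta \<sigma> L n x \<nu> t N \<theta>0 a b) (I2_theta \<sigma> L n x \<nu> t N \<theta>0 c d) =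
      1 / real N * (\<Sum>\<alpha><?m. \<Sum>\<beta><?m. ddh \<alpha> a b * ddh \<beta> c d * fisher_h \<nu> t (n L) (h \<theta>0) \<alpha> \<beta>)"
    if "a \<in> P" "b \<in> P" "c \<in> P" "d \<in> P" for a b c d
  proof -
    have "cov S (I2_theta \<sigma> L n x \<nu> t N \<theta>0 a b) (I2_theta \<sigma> L n x \<nu> t N \<theta>0 c d) = 1 / real N * cov \<mu> (wf a b) (wf c d)"
      unfolding I2t[OF that(1,2)] I2t[OF that(3,4)] S_eq by (rule I.Lcov[OF L2\<mu>[OF PBwf] L2\<mu>[OF PBwf]])
    also have "cov \<mu> (wf a b) (wf c d) = (\<Sum>\<alpha><?m. \<Sum>\<beta><?m. (- ddh \<alpha> a b) * (- ddh \<beta> c d) * fisher_h \<nu> t (n L) (h \<theta>0) \<alpha> \<beta>)"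
      unfolding wfabs by (rule covlin)
    finally show ?thesis by simp
  qed
  have part2: "cov S (I2_xi \<sigma> L n x \<nu> t N \<Theta> \<xi>0 i j) (I2_xi \<sigma> L n x \<nu> t N \<Theta> \<xi>0 k l) =
       (\<Sum>a\<in>P. \<Sum>b\<in>P. \<Sum>c\<in>P. \<Sum>d\<in>P. J a i * J b j * J c k * J d l *
          cov S (I2_theta \<sigma> L n x \<nu> t N \<theta>0 a b) (I2_theta \<sigma> L n x \<nu> t N \<theta>0 c d))
       + (1 / real N) * (\<Sum>\<alpha><n L. \<Sum>\<beta><n L.
           ((\<Sum>a\<in>P. \<Sum>b\<in>P. \<Sum>c\<in>P. J a i * J b j * H c k l * ddh \<alpha> a b * dh \<beta> c)
          + (\<Sum>a\<in>P. \<Sum>b\<in>P. \<Sum>c\<in>P. H a i j * J b k * J c l * dh \<alpha> a * ddh \<beta> b c)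
          + (\<Sum>a\<in>P. \<Sum>b\<in>P. H a i j * H b k l * dh \<alpha> a * dh \<beta> b))
           * fisher_h \<nu> t (n L) (h \<theta>0) \<alpha> \<beta>)"
  proof -
    have "(\<Sum>a\<in>P. \<Sum>b\<in>P. \<Sum>c\<in>P. \<Sum>d\<in>P. J a i * J b j * J c k * J d l *
          cov S (I2_theta \<sigma> L n x \<nu> t N \<theta>0 a b) (I2_theta \<sigma> L n x \<nu> t N \<theta>0 c d)) =
        (\<Sum>a\<in>P. \<Sum>b\<in>P. \<Sum>c\<in>P. \<Sum>d\<in>P. J a i * J b j * J c k * J d l *
          (1 / real N * (\<Sum>\<alpha><?m. \<Sum>\<beta><?m. ddh \<alpha> a b * ddh \<beta> c d * fisher_h \<nu> t (n L) (h \<theta>0) \<alpha> \<beta>)))"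
      by (intro sum.cong refl) (simp add: c2)
    then show ?thesis
      unfolding c1 E1_def E2_def
      using final_alg[where J=J and HH=H and dh=dh and ddh=ddh and F="fisher_h \<nu> t (n L) (h \<theta>0)"
          and P=P and M="{..<?m}" and c="1 / real N" and i=i and j=j and k=k and l=l]
      by simp
  qed
  show ?thesis using part1 part2 by blast
qed


end
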